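(* Let $G,H$ be loopless multigraphs on a finite set $V$ with $\deg_G(v)=\deg_H(v)\le2$ for all $v$, let $V_4$ be the set of vertices where this common degree is $2$, and let $M\in\mathcal{PM}(G,H)$. For $S\subseteq V_4$ we always have $\mathrm{cycles}(M^{\oplus S})\le\mathrm{cycles}(M)+|S|$, and $$\mathrm{cycles}(M^{\oplus S})=\mathrm{cycles}(M)+|S|$$ holds if and only if $S\subseteq\mathrm{gg}(M)$ and $S$ is non-crossing.
   Context: $G\cup H$ is the multigraph on $V$ with edge multiset the disjoint union of $E(G)$ and $E(H)$; each edge has two half-edges, one at each endpoint, called $G$- or $H$-half-edges by origin. $\mathcal{PM}(G,H)$ is the set of collections $M=(M_v)_{v\in V}$ where $M_v$ is a perfect matching of the half-edges at $v$ each of whose pairs consists of one $G$- and one $H$-half-edge. For a collection $N$ of perfect matchings at all vertices, $\Gamma_N$ is the multigraph on half-edges with an edge joining the two half-edges of each edge and one per matched pair; its components are cycles and $\mathrm{cycles}(N)$ is their number. For $v\in V_4$ with $M_v=\{\{g_1,h_1\},\{g_2,h_2\}\}$, $M^{\oplus v}$ agrees with $M$ except that at $v$ it uses $\{\{g_1,g_2\},\{h_1,h_2\}\}$; $M^{\oplus S}$ applies this at every $v\in S$. For a cycle $C$ of $\Gamma_M$, $C$ visits $v$ twice if all four half-edges at $v$ lie in $C$ (it passes through $v$ once via each pair of $M_v$). The matching induced at $v$ (by $M$ restricted to vertices other than $v$) pairs each half-edge $h$ at $v$ with the half-edge at $v$ reached from $h$ by traversing its edge and then alternately following matched pairs at other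 vertices and edges, until first returning to $v$. $\mathrm{gg}(C)$ is the set of $v\in V_4$ visited twice by $C$ whose induced matching contains a pair of two $G$-half-edges; $\mathrm{gg}(M)=\bigcup_C\mathrm{gg}(C)$. Drawing each cycle $C$ as a circle on which each passage through a vertex is a point, each $v$ visited twice by $C$ determines a chord joining its two passages; $S$ is non-crossing if, for every cycle $C$, the chords of the vertices of $S$ visited twice by $C$ are pairwise non-crossing (their endpoints do not interleave around the circle). *)

theory Defs
  imports Main
begin

text \<open>A loopless multigraph with edge set E (edge identifiers of type 'a) and
endpoint map: an edge a has the two ends fst (ends a) and snd (ends a).\<close>
type_synonym ('v,'a) mgraph = "'a set \<times> ('a \<Rightarrow> 'v \<times> 'v)"

definition edges :: "('v,'a) mgraph \<Rightarrow> 'a set" where "edges G = fst G"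

definition ep :: "('v,'a) mgraph \<Rightarrow> 'a \<Rightarrow> bool \<Rightarrow> 'v" where
  "ep G a s = (if s then snd (snd G a) else fst (snd G a))"

definition multigraph_on :: "'v set \<Rightarrow> ('v,'a) mgraph \<Rightarrow> bool" where
  "multigraph_on V G \<longleftrightarrow> finite (edges G) \<and> (\<forall>a\<in>edges G. \<forall>s. ep G a s \<in> V)"

definition loopless :: "('v,'a) mgraph \<Rightarrow> bool" where
  "loopless G \<longleftrightarrow> (\<forall>a\<in>edges G. ep G a True \<noteq> ep G a False)"

definition deg :: "('v,'a) mgraph \<Rightarrow> 'v \<Rightarrow> nat" where
  "deg G v = card {(a,s). a \<in> edges G \<and> ep G a s = v}"

definition V4 :: "'v set \<Rightarrow> ('v,'a) mgraph \<Rightarrow> 'v set" where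
  "V4 V G = {v\<in>V. deg G v = 2}"

text \<open>Half-edges of the union G \<union> H: (Inl a, s) is the end s of G-edge a,
(Inr b, s) the end s of H-edge b.\<close>
type_synonym ('a,'b) half = "('a + 'b) \<times> bool"

definition halves :: "('v,'a) mgraph \<Rightarrow> ('v,'b) mgraph \<Rightarrow> ('a,'b) half set" where
  "halves G H = {(Inl a, s) |a s. a \<in> edges G} \<union> {(Inr b, s) |b s. b \<in> edges H}"

definition hvtx :: "('v,'a) mgraph \<Rightarrow> ('v,'b) mgraph \<Rightarrow> ('a,'b) half \<Rightarrow> 'v" where
  "hvtx G H h = (case fst h of Inl a \<Rightarrow> ep G a (snd h) | Inr b \<Rightarrow> ep H b (snd h))"

definition hflip :: "('a,'b) half \<Rightarrow> ('a,'b) half" where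
  "hflip h = (fst h, \<not> snd h)"

definition isGh :: "('a,'b) half \<Rightarrow> bool" where
  "isGh h = isl (fst h)"

text \<open>A collection N of perfect matchings of the half-edges at every vertex,
encoded as a fixed-point-free involution on half-edges preserving the vertex
(identity outside the half-edges).\<close>
definition is_pmc :: "('v,'a) mgraph \<Rightarrow> ('v,'b) mgraph \<Rightarrow> (('a,'b) half \<Rightarrow> ('a,'b) half) \<Rightarrow> bool" where
  "is_pmc G H N \<longleftrightarrow>
     (\<forall>h\<in>halves G H. N h \<in> halves G H \<and> N h \<noteq> h \<and> N (N h) = h \<and> hvtx G H (N h) = hvtx G H h)
   \<and> (\<forall>h. h \<notin> halves G H \<longrightarrow> N h = h)"

definition PM :: "('v,'a) mgraph \<Rightarrow> ('v,'b) mgraph \<Rightarrow> (('a,'b) half \<Rightarrow> ('a,'b) half) set" where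
  "PM G H = {N. is_pmc G H N \<and> (\<forall>h\<in>halves G H. isGh (N h) \<noteq> isGh h)}"

definition gamma_rel :: "('v,'a) mgraph \<Rightarrow> ('v,'b) mgraph \<Rightarrow> (('a,'b) half \<Rightarrow> ('a,'b) half)
   \<Rightarrow> (('a,'b) half \<times> ('a,'b) half) set" where
  "gamma_rel G H N = {(h, hflip h) |h. h \<in> halves G H} \<union> {(h, N h) |h. h \<in> halves G H}"

definition conn :: "('v,'a) mgraph \<Rightarrow> ('v,'b) mgraph \<Rightarrow> (('a,'b) half \<Rightarrow> ('a,'b) half)
   \<Rightarrow> (('a,'b) half \<times> ('a,'b) half) set" where
  "conn G H N = (gamma_rel G H N \<union> (gamma_rel G H N)\<inverse>)\<^sup>*"

definition cycles :: "('v,'a) mgraph \<Rightarrow> ('v,'b) mgraph \<Rightarrow> (('a,'b) half \<Rightarrow> ('a,'b) half) \<Rightarrow> nat" where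
  "cycles G H N = card (halves G H // conn G H N)"

text \<open>M^{\<oplus>S}: at each v in S, pair the two G-half-edges and the two H-half-edges.\<close>
definition flipS :: "('v,'a) mgraph \<Rightarrow> ('v,'b) mgraph \<Rightarrow> (('a,'b) half \<Rightarrow> ('a,'b) half)
   \<Rightarrow> 'v set \<Rightarrow> ('a,'b) half \<Rightarrow> ('a,'b) half" where
  "flipS G H M S h = (if h \<in> halves G H \<and> hvtx G H h \<in> S
      then (THE h'. h' \<in> halves G H \<and> hvtx G H h' = hvtx G H h \<and> h' \<noteq> h \<and> isGh h' = isGh h)
      else M h)"

text \<open>Traversal step: from a half-edge at which we depart, cross its edge and
leave the next vertex via the matched partner.\<close>
definition Tstep :: "(('a,'b) half \<Rightarrow> ('a,'b) half) \<Rightarrow> ('a,'b) half \<Rightarrow> ('a,'b) half" where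
  "Tstep M h = M (hflip h)"

text \<open>C visits v twice: all half-edges at v lie in one cycle.\<close>
definition visits_twice :: "('v,'a) mgraph \<Rightarrow> ('v,'b) mgraph \<Rightarrow> (('a,'b) half \<Rightarrow> ('a,'b) half) \<Rightarrow> 'v \<Rightarrow> bool" where
  "visits_twice G H M v \<longleftrightarrow>
     (\<forall>h\<in>halves G H. \<forall>h'\<in>halves G H. hvtx G H h = v \<and> hvtx G H h' = v \<longrightarrow> (h, h') \<in> conn G H M)"

text \<open>Matching induced at v: from h, traverse its edge, then alternately matched
pairs (at vertices other than v) and edges, until first returning to v.\<close>
definition induced :: "('v,'a) mgraph \<Rightarrow> ('v,'b) mgraph \<Rightarrow> (('a,'b) half \<Rightarrow> ('a,'b) half)
   \<Rightarrow> 'v \<Rightarrow> ('a,'b) half \<Rightarrow> ('a,'b) half" where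
  "induced G H M v h =
     hflip ((Tstep M ^^ (LEAST k. hvtx G H (hflip ((Tstep M ^^ k) h)) = v)) h)"

definition gg :: "'v set \<Rightarrow> ('v,'a) mgraph \<Rightarrow> ('v,'b) mgraph \<Rightarrow> (('a,'b) half \<Rightarrow> ('a,'b) half) \<Rightarrow> 'v set" where
  "gg V G H M = {v \<in> V4 V G. visits_twice G H M v \<and>
     (\<exists>h\<in>halves G H. hvtx G H h = v \<and> isGh h \<and> isGh (induced G H M v h))}"

text \<open>Passages of a cycle, in cyclic order, are the departure half-edges
x, Tstep M x, Tstep M (Tstep M x), ... (one period). The chords of u and w cross
iff their passages interleave: u, w, u, w within one period starting at a passage of u.\<close>
definition crosses :: "('v,'a) mgraph \<Rightarrow> ('v,'b) mgraph \<Rightarrow> (('a,'b) half \<Rightarrow> ('a,'b) half) \<Rightarrow> 'v \<Rightarrow> 'v \<Rightarrow> bool" where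
  "crosses G H M u w \<longleftrightarrow> (\<exists>x\<in>halves G H. \<exists>k1 k2 k3::nat.
      hvtx G H x = u \<and> 0 < k1 \<and> k1 < k2 \<and> k2 < k3 \<and>
      hvtx G H ((Tstep M ^^ k1) x) = w \<and> hvtx G H ((Tstep M ^^ k2) x) = u \<and>
      hvtx G H ((Tstep M ^^ k3) x) = w \<and>
      (\<forall>j. 0 < j \<and> j \<le> k3 \<longrightarrow> (Tstep M ^^ j) x \<noteq> x))"

definition non_crossing :: "('v,'a) mgraph \<Rightarrow> ('v,'b) mgraph \<Rightarrow> (('a,'b) half \<Rightarrow> ('a,'b) half) \<Rightarrow> 'v set \<Rightarrow> bool" where
  "non_crossing G H M S \<longleftrightarrow> (\<forall>u\<in>S. \<forall>w\<in>S. u \<noteq> w \<longrightarrow> \<not> crosses G H M u w)"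

end

theory Submission
  imports Defs
begin


definition permX :: "'a set \<Rightarrow> ('a \<Rightarrow> 'a) \<Rightarrow> bool" where
  "permX X P \<longleftrightarrow> finite X \<and> (\<forall>x\<in>X. P x \<in> X) \<and> inj_on P X"

definition cyc :: "'a set \<Rightarrow> ('a \<Rightarrow> 'a) \<Rightarrow> 'a \<Rightarrow> 'a \<Rightarrow> bool" where
  "cyc X P x y \<longleftrightarrow> x \<in> X \<and> (\<exists>k. (P ^^ k) x = y)"

definition per :: "('a \<Rightarrow> 'a) \<Rightarrow> 'a \<Rightarrow> nat" where
  "per P x = (LEAST n. 0 < n \<and> (P ^^ n) x = x)"

definition pdist :: "('a \<Rightarrow> 'a) \<Rightarrow> 'a \<Rightarrow> 'a \<Rightarrow> nat" where
  "pdist P x y = (LEAST k. (P ^^ k) x = y)"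

lemma funpow_app: "(f ^^ i) ((f ^^ k) x) = (f ^^ (i + k)) x"
  by (simp add: funpow_add)

lemma permX_funpow_in: "permX X P \<Longrightarrow> x \<in> X \<Longrightarrow> (P ^^ k) x \<in> X"
  by (induction k) (auto simp: permX_def)

lemma permX_inj_funpow: "permX X P \<Longrightarrow> inj_on (P ^^ k) X"
proof (induction k)
  case 0 then show ?case by simp
next
  case (Suc k)
  have "inj_on (P \<circ> (P ^^ k)) X"
    apply (rule comp_inj_on) using Suc permX_funpow_in[OF Suc.prems]
    by (auto simp: permX_def intro: inj_on_subset)
  then show ?case by (simp add: comp_def)
qed

lemma permX_return: assumes "permX X P" "x \<in> X" shows "\<exists>n>0. (P ^^ n) x = x"
proof -
  let ?f = "\<lambda>k. (P ^^ k) x"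
  have fin: "finite X" using assms by (simp add: permX_def)
  have "?f ` {0..card X} \<subseteq> X" using permX_funpow_in[OF assms] by auto
  then have "card (?f ` {0..card X}) \<le> card X" using fin by (simp add: card_mono)
  then have "\<not> inj_on ?f {0..card X}" using card_image[of ?f "{0..card X}"] by auto
  then obtain i j where ij: "i \<le> card X" "j \<le> card X" "i \<noteq> j" "?f i = ?f j"
    by (auto simp: inj_on_def)
  { fix i j assume "i < j" "?f i = ?f j"
    then have "(P ^^ i) ((P ^^ (j - i)) x) = (P ^^ i) x"
      by (simp add: funpow_app)
    then have "(P ^^ (j - i)) x = x"
      using permX_inj_funpow[OF assms(1), of i] permX_funpow_in[OF assms] assms(2)
      by (auto simp: inj_on_def)
    then have "\<exists>n>0. (P ^^ n) x = x" using \<open>i < j\<close> by (intro exI[of _ "j - i"]) auto }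
  then show ?thesis using ij by (metis linorder_neqE_nat)
qed

context fixes X P assumes pX: "permX X P" begin

lemma per_pos: "x \<in> X \<Longrightarrow> 0 < per P x"
  unfolding per_def using permX_return[OF pX] by (metis (mono_tags, lifting) LeastI)

lemma per_eq: "x \<in> X \<Longrightarrow> (P ^^ per P x) x = x"
  unfolding per_def using permX_return[OF pX] by (metis (mono_tags, lifting) LeastI)

lemma per_min: "0 < j \<Longrightarrow> j < per P x \<Longrightarrow> (P ^^ j) x \<noteq> x"
  unfolding per_def using not_less_Least by blast

lemma funpow_per_mult: "x \<in> X \<Longrightarrow> (P ^^ (q * per P x)) x = x"
proof (induction q)
  case 0 then show ?case by simp
next
  case (Suc q)
  have "(P ^^ (Suc q * per P x)) x = (P ^^ (q * per P x)) ((P ^^ per P x) x)"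
    by (simp add: funpow_app add.commute)
  then show ?case using Suc per_eq by simp
qed

lemma funpow_mod: "x \<in> X \<Longrightarrow> (P ^^ k) x = (P ^^ (k mod per P x)) x"
proof -
  assume x: "x \<in> X"
  have "(P ^^ k) x = (P ^^ (k mod per P x)) ((P ^^ (k div per P x * per P x)) x)"
    by (simp add: funpow_app mod_div_mult_eq)
  then show ?thesis using funpow_per_mult[OF x] by simp
qed

lemma funpow_inj_per: assumes "x \<in> X" "i < per P x" "j < per P x" "(P ^^ i) x = (P ^^ j) x"
  shows "i = j"
proof (rule ccontr)
  assume "i \<noteq> j"
  { fix i j assume ij: "i < j" "j < per P x" "(P ^^ i) x = (P ^^ j) x"
    then have "(P ^^ i) ((P ^^ (j - i)) x) = (P ^^ i) x" by (simp add: funpow_app)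
    then have "(P ^^ (j - i)) x = x"
      using permX_inj_funpow[OF pX, of i] permX_funpow_in[OF pX] assms(1)
      by (auto simp: inj_on_def)
    moreover have "(P ^^ (j - i)) x \<noteq> x" using ij by (intro per_min) auto
    ultimately have False by simp }
  then show False using assms \<open>i \<noteq> j\<close> by (metis linorder_neqE_nat)
qed

lemma cyc_in: "cyc X P x y \<Longrightarrow> x \<in> X \<and> y \<in> X"
  unfolding cyc_def using permX_funpow_in[OF pX] by auto

lemma cyc_refl: "x \<in> X \<Longrightarrow> cyc X P x x"
  unfolding cyc_def by (auto intro: exI[of _ 0])

lemma cyc_funpow: "x \<in> X \<Longrightarrow> cyc X P x ((P ^^ k) x)"
  unfolding cyc_def by auto

lemma cyc_trans: "cyc X P x y \<Longrightarrow> cyc X P y z \<Longrightarrow> cyc X P x z"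
  unfolding cyc_def by (metis funpow_app)

lemma cyc_sym: assumes "cyc X P x y" shows "cyc X P y x"
proof -
  obtain k where k: "(P ^^ k) x = y" and x: "x \<in> X" using assms unfolding cyc_def by auto
  let ?r = "k mod per P x"
  have r: "?r < per P x" using per_pos[OF x] by simp
  have y: "y = (P ^^ ?r) x" using k funpow_mod[OF x] by simp
  have "(P ^^ (per P x - ?r)) y = (P ^^ per P x) x" using y r by (simp add: funpow_app)
  then show ?thesis using per_eq[OF x] cyc_in[OF assms] unfolding cyc_def by metis
qed

lemma pdist_prop: assumes "cyc X P x y"
  shows "(P ^^ pdist P x y) x = y" "pdist P x y < per P x"
proof -
  obtain k where k: "(P ^^ k) x = y" and x: "x \<in> X" using assms unfolding cyc_def by auto
  show "(P ^^ pdist P x y) x = y" unfolding pdist_def using k by (rule LeastI)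
  have "(P ^^ (k mod per P x)) x = y" using k funpow_mod[OF x] by simp
  then have "pdist P x y \<le> k mod per P x" unfolding pdist_def by (rule Least_le)
  then show "pdist P x y < per P x" using per_pos[OF x] by (meson mod_less_divisor order_le_less_trans)
qed

lemma pdist_unique: "x \<in> X \<Longrightarrow> k < per P x \<Longrightarrow> (P ^^ k) x = y \<Longrightarrow> pdist P x y = k"
  using pdist_prop[of x y] funpow_inj_per[of x k "pdist P x y"] cyc_def by metis

lemma pdist_self: "x \<in> X \<Longrightarrow> pdist P x x = 0"
  using pdist_unique[of x 0 x] per_pos by simp

lemma pdist_zero: "cyc X P x y \<Longrightarrow> pdist P x y = 0 \<Longrightarrow> y = x"
  using pdist_prop by fastforce

lemma per_cyc: assumes "cyc X P x y" shows "per P y = per P x"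
proof -
  have le: "per P y \<le> per P x" if c: "cyc X P x y" for x y
  proof -
    obtain k where k: "(P ^^ k) x = y" and x: "x \<in> X" using c unfolding cyc_def by auto
    have "(P ^^ per P x) y = (P ^^ k) ((P ^^ per P x) x)" using k by (metis funpow_app add.commute)
    then have "(P ^^ per P x) y = y" using per_eq[OF x] k by simp
    moreover have "y \<in> X" using cyc_in[OF c] by simp
    ultimately show ?thesis using per_min[of "per P x" y] per_pos[OF x] by (meson not_less)
  qed
  show ?thesis using le[OF assms] le[OF cyc_sym[OF assms]] by simp
qed

lemma pdist_formula: assumes "cyc X P a y" "cyc X P a z"
  shows "pdist P y z = (pdist P a z + per P a - pdist P a y) mod per P a"
proof -
  let ?n = "per P a" and ?py = "pdist P a y" and ?pz = "pdist P a z"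
  have a: "a \<in> X" using cyc_in[OF assms(1)] by simp
  have n: "0 < ?n" using per_pos[OF a] .
  have py: "?py < ?n" "(P ^^ ?py) a = y" using pdist_prop[OF assms(1)] by auto
  have pz: "?pz < ?n" "(P ^^ ?pz) a = z" using pdist_prop[OF assms(2)] by auto
  let ?k = "(?pz + ?n - ?py) mod ?n"
  have "(P ^^ ?k) y = (P ^^ (?k + ?py)) a" using funpow_app[where f=P and i="?k" and k="?py" and x=a] py(2) by simp
  also have "\<dots> = (P ^^ ((?k + ?py) mod ?n)) a" using funpow_mod[OF a] by simp
  also have "(?k + ?py) mod ?n = ?pz"
  proof -
    have "(?k + ?py) mod ?n = ((?pz + ?n - ?py) + ?py) mod ?n" by (simp add: mod_add_left_eq)
    also have "\<dots> = (?pz + ?n) mod ?n" using py by simp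
    finally show ?thesis using pz by simp
  qed
  finally have "(P ^^ ?k) y = z" using pz by simp
  moreover have "per P y = ?n" using per_cyc[OF assms(1)] .
  moreover have "y \<in> X" using cyc_in[OF assms(1)] by simp
  ultimately show ?thesis using pdist_unique[of y ?k z] n by simp
qed

end


lemma AR1: "(p::nat) < N \<Longrightarrow> x < N \<Longrightarrow> (x + N - p) mod N = (if p \<le> x then x - p else x + N - p)"
proof (cases "p \<le> x")
  case True
  assume "p < N" "x < N"
  then have e: "x + N - p = (x - p) + N" using True by simp
  have "(x + N - p) mod N = x - p" unfolding e using \<open>x < N\<close> by simp
  then show ?thesis using True by simp
next
  case False
  assume "p < N" "x < N"
  then show ?thesis using False by simp
qed

lemma AR2: "(pc::nat) < m \<Longrightarrow> pd < m \<Longrightarrow> pe < m \<Longrightarrow> m \<le> n \<Longrightarrow>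
  ((pe + m - pc) mod m < (pd + m - pc) mod m) \<longleftrightarrow> ((pe + n - pc) mod n < (pd + n - pc) mod n)"
  apply (simp add: AR1) by arith

lemma AR3: "(pc::nat) < m \<Longrightarrow> pd < m \<Longrightarrow> m \<le> pe \<Longrightarrow> pe < n \<Longrightarrow> m \<le> pf \<Longrightarrow> pf < n \<Longrightarrow>
  ((pe + n - pc) mod n < (pd + n - pc) mod n) \<longleftrightarrow> ((pf + n - pc) mod n < (pd + n - pc) mod n)"
  apply (simp add: AR1) by arith

lemma AR4: "(m::nat) < n \<Longrightarrow> pc < n \<Longrightarrow> pd < n \<Longrightarrow> 0 < m \<Longrightarrow> 0 < pc \<Longrightarrow> 0 < pd \<Longrightarrow>
  m \<noteq> pc \<Longrightarrow> m \<noteq> pd \<Longrightarrow> pc \<noteq> pd \<Longrightarrow>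
  ((pc < m) \<noteq> (pd < m)) \<longleftrightarrow>
  (((0 + n - pc) mod n < (pd + n - pc) mod n) \<noteq> ((m + n - pc) mod n < (pd + n - pc) mod n))"
  apply (simp add: AR1) by arith

lemma AR5: "(m::nat) < n \<Longrightarrow> 0 < m \<Longrightarrow> py < n \<Longrightarrow>
  ((py + n - m) mod n < (0 + n - m) mod n) \<longleftrightarrow> \<not> py < m"
  apply (simp add: AR1) by arith


definition sw :: "'a \<Rightarrow> 'a \<Rightarrow> 'a \<Rightarrow> 'a" where
  "sw a b z = (if z = a then b else if z = b then a else z)"

lemma sw_comm: "sw b a = sw a b"
  by (rule ext) (simp add: sw_def)

lemma sw_other: "z \<noteq> a \<Longrightarrow> z \<noteq> b \<Longrightarrow> sw a b z = z"
  by (simp add: sw_def)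

lemma permX_sw: assumes "permX X P" "a \<in> X" "b \<in> X" shows "permX X (sw a b \<circ> P)"
proof -
  have "inj_on (sw a b) X" by (auto simp: inj_on_def sw_def split: if_splits)
  then have "inj_on (sw a b \<circ> P) X"
    using assms by (intro comp_inj_on) (auto simp: permX_def intro: inj_on_subset)
  then show ?thesis using assms by (auto simp: permX_def sw_def)
qed

lemma sw_funpow_agree:
  fixes P :: "'a \<Rightarrow> 'a"
  assumes "\<forall>j. 0 < j \<and> j < k \<longrightarrow> (P ^^ j) x \<noteq> a \<and> (P ^^ j) x \<noteq> b"
  shows "j < k \<Longrightarrow> ((sw a b \<circ> P) ^^ j) x = (P ^^ j) x"
proof (induction j)
  case 0 then show ?case by simp
next
  case (Suc j)
  have ih: "((sw a b \<circ> P) ^^ j) x = (P ^^ j) x" by (metis Suc.IH Suc.prems Suc_lessD)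
  have "((sw a b \<circ> P) ^^ Suc j) x = sw a b (P (((sw a b \<circ> P) ^^ j) x))" by simp
  then have "((sw a b \<circ> P) ^^ Suc j) x = sw a b ((P ^^ Suc j) x)" using ih by simp
  moreover have "(P ^^ Suc j) x \<noteq> a \<and> (P ^^ Suc j) x \<noteq> b" using assms Suc.prems by blast
  ultimately show ?case by (simp add: sw_other comp_def)
qed

lemma sw_funpow_last:
  fixes P :: "'a \<Rightarrow> 'a"
  assumes "\<forall>j. 0 < j \<and> j < k \<longrightarrow> (P ^^ j) x \<noteq> a \<and> (P ^^ j) x \<noteq> b" "0 < k"
  shows "((sw a b \<circ> P) ^^ k) x = sw a b ((P ^^ k) x)"
proof -
  obtain j where k: "k = Suc j" using assms(2) by (cases k) auto
  then show ?thesis using sw_funpow_agree[OF assms(1), of j] by simp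
qed

lemma sw_funpow_all:
  fixes P :: "'a \<Rightarrow> 'a"
  assumes "\<forall>j. 0 < j \<longrightarrow> (P ^^ j) x \<noteq> a \<and> (P ^^ j) x \<noteq> b"
  shows "((sw a b \<circ> P) ^^ j) x = (P ^^ j) x"
  using sw_funpow_agree[of "Suc j" P x a b j] assms by auto

definition Rel :: "'a set \<Rightarrow> ('a \<Rightarrow> 'a) \<Rightarrow> ('a \<times> 'a) set" where
  "Rel X P = {(x, y). cyc X P x y}"

definition nu :: "'a set \<Rightarrow> ('a \<Rightarrow> 'a) \<Rightarrow> nat" where
  "nu X P = card (X // Rel X P)"

lemma equiv_Rel: assumes "permX X P" shows "equiv X (Rel X P)"
proof (rule equivI)
  show "Rel X P \<subseteq> X \<times> X" unfolding Rel_def using cyc_in[OF assms] by auto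
  show "refl_on X (Rel X P)" unfolding refl_on_def Rel_def using cyc_refl[OF assms] by auto
  show "sym (Rel X P)" unfolding sym_def Rel_def using cyc_sym[OF assms] by auto
  show "trans (Rel X P)" unfolding trans_def Rel_def using cyc_trans[OF assms] by blast
qed

lemma Rel_Image: "Rel X P `` {x} = {y. cyc X P x y}"
  by (auto simp: Rel_def)

lemma card_quotient_mono:
  assumes "finite X" "equiv X E" "equiv X E'" "E \<subseteq> E'"
  shows "card (X // E') \<le> card (X // E)"
proof -
  have "X // E' = (\<lambda>C. E' `` C) ` (X // E)"
  proof -
    have "E' `` (E `` {x}) = E' `` {x}" if "x \<in> X" for x
    proof
      show "E' `` {x} \<subseteq> E' `` (E `` {x})"
        using assms(2) that by (auto simp: equiv_def refl_on_def)
      show "E' `` (E `` {x}) \<subseteq> E' `` {x}"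
        using assms(3,4) unfolding equiv_def trans_def by blast
    qed
    then show ?thesis unfolding quotient_def by auto
  qed
  moreover have "finite (X // E)"
    using assms by (intro finite_quotient) (auto simp: equiv_def refl_on_def)
  ultimately show ?thesis by (simp add: card_image_le)
qed

context fixes X P a b assumes pX: "permX X P" and ab: "cyc X P a b" "a \<noteq> b"
begin

abbreviation "P' \<equiv> sw a b \<circ> P"

lemma aX: "a \<in> X" and bX: "b \<in> X" using cyc_in[OF pX ab(1)] by auto

lemma pX': "permX X P'" using permX_sw[OF pX aX bX] .

lemma m_pos: "0 < pdist P a b" using pdist_zero[OF pX ab(1)] ab(2) by (metis neq0_conv)

lemma m_less: "pdist P a b < per P a" using pdist_prop[OF pX ab(1)] by simp

lemma split_cond: "\<forall>j. 0 < j \<and> j < pdist P a b \<longrightarrow> (P ^^ j) a \<noteq> a \<and> (P ^^ j) a \<noteq> b"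
proof (intro allI impI)
  fix j assume j: "0 < j \<and> j < pdist P a b"
  have "(P ^^ j) a \<noteq> a" using per_min[OF pX, of j a] j m_less by simp
  moreover have "(P ^^ j) a \<noteq> b" using j unfolding pdist_def using not_less_Least by blast
  ultimately show "(P ^^ j) a \<noteq> a \<and> (P ^^ j) a \<noteq> b" by simp
qed

lemma split_agree: "j < pdist P a b \<Longrightarrow> (P' ^^ j) a = (P ^^ j) a"
  using sw_funpow_agree[OF split_cond] .

lemma split_last: "(P' ^^ pdist P a b) a = a"
  using sw_funpow_last[OF split_cond m_pos] pdist_prop[OF pX ab(1)] by (simp add: sw_def)

lemma per'_a: "per P' a = pdist P a b"
  unfolding per_def
proof (rule Least_equality)
  show "0 < pdist P a b \<and> (P' ^^ pdist P a b) a = a" using m_pos split_last by simp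
  fix y assume y: "0 < y \<and> (P' ^^ y) a = a"
  show "pdist P a b \<le> y"
  proof (rule ccontr)
    assume "\<not> pdist P a b \<le> y"
    then have "(P' ^^ y) a = (P ^^ y) a" "y < pdist P a b" using split_agree by auto
    then show False using split_cond y by auto
  qed
qed

lemma cyc'_a_iff: "cyc X P' a y \<longleftrightarrow> cyc X P a y \<and> pdist P a y < pdist P a b"
proof
  assume c: "cyc X P' a y"
  then obtain k where k: "(P' ^^ k) a = y" unfolding cyc_def by auto
  let ?r = "k mod pdist P a b"
  have r: "?r < pdist P a b" using m_pos by simp
  have "(P' ^^ ?r) a = y" using funpow_mod[OF pX' aX, of k] k per'_a by simp
  then have y: "(P ^^ ?r) a = y" using split_agree[OF r] by simp
  then have "cyc X P a y" using cyc_funpow[OF pX aX] by metis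
  moreover have "pdist P a y = ?r" using pdist_unique[OF pX aX _ y] r m_less by simp
  ultimately show "cyc X P a y \<and> pdist P a y < pdist P a b" using r by simp
next
  assume c: "cyc X P a y \<and> pdist P a y < pdist P a b"
  then have "(P' ^^ pdist P a y) a = y" using split_agree pdist_prop[OF pX] by metis
  then show "cyc X P' a y" using cyc_funpow[OF pX' aX] by metis
qed

lemma pdist'_a: "cyc X P a y \<Longrightarrow> pdist P a y < pdist P a b \<Longrightarrow> pdist P' a y = pdist P a y"
  using pdist_unique[OF pX' aX, of "pdist P a y" y] per'_a split_agree pdist_prop[OF pX] by metis

lemma outside_agree: assumes "x \<in> X" "\<not> cyc X P a x" shows "(P' ^^ j) x = (P ^^ j) x"
proof -
  have "\<forall>j. 0 < j \<longrightarrow> (P ^^ j) x \<noteq> a \<and> (P ^^ j) x \<noteq> b"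
  proof (intro allI impI)
    fix j
    have c: "cyc X P x ((P ^^ j) x)" using cyc_funpow[OF pX assms(1)] .
    show "(P ^^ j) x \<noteq> a \<and> (P ^^ j) x \<noteq> b"
      using assms(2) cyc_sym[OF pX] cyc_trans[OF pX] c ab(1) by metis
  qed
  then show ?thesis by (rule sw_funpow_all)
qed

lemma outside_cyc: assumes "x \<in> X" "\<not> cyc X P a x" shows "cyc X P' x y \<longleftrightarrow> cyc X P x y"
proof -
  have "\<forall>j. (P' ^^ j) x = (P ^^ j) x" using outside_agree[OF assms] by blast
  then show ?thesis unfolding cyc_def by simp
qed

lemma outside_pdist: assumes "x \<in> X" "\<not> cyc X P a x" shows "pdist P' x y = pdist P x y"
proof -
  have "\<forall>j. (P' ^^ j) x = (P ^^ j) x" using outside_agree[OF assms] by blast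
  then show ?thesis unfolding pdist_def by simp
qed

end


definition cross :: "'a set \<Rightarrow> ('a \<Rightarrow> 'a) \<Rightarrow> 'a \<Rightarrow> 'a \<Rightarrow> 'a \<Rightarrow> 'a \<Rightarrow> bool" where
  "cross X P c d e f \<longleftrightarrow> cyc X P c d \<and> cyc X P c e \<and> cyc X P c f \<and>
     ((pdist P c e < pdist P c d) \<noteq> (pdist P c f < pdist P c d))"

context fixes X P a b assumes pX: "permX X P" and ab: "cyc X P a b" "a \<noteq> b"
begin

abbreviation "Q \<equiv> sw a b \<circ> P"

lemma swba: "sw b a = sw a b" by (rule sw_comm)

lemma ba: "cyc X P b a" "b \<noteq> a" using cyc_sym[OF pX ab(1)] ab(2) by auto

lemma aX2: "a \<in> X" and bX2: "b \<in> X" using cyc_in[OF pX ab(1)] by auto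

lemma pQ: "permX X Q" using pX'[OF pX ab] .

lemma cyc_a_trans: "cyc X P a y \<Longrightarrow> cyc X P y z \<longleftrightarrow> cyc X P a z"
  using cyc_sym[OF pX] cyc_trans[OF pX] by blast

lemma pdist_b: "cyc X P a y \<Longrightarrow> pdist P b y = (pdist P a y + per P a - pdist P a b) mod per P a"
  using pdist_formula[OF pX ab(1)] by simp

lemma pdist_ba: "pdist P b a = per P a - pdist P a b"
proof -
  have "pdist P b a = (pdist P a a + per P a - pdist P a b) mod per P a"
    using pdist_formula[OF pX ab(1) cyc_refl[OF pX aX2]] .
  then show ?thesis using pdist_self[OF pX aX2] m_pos[OF pX ab] m_less[OF pX ab] by simp
qed

lemma b_side: assumes "cyc X P a y"
  shows "pdist P b y < pdist P b a \<longleftrightarrow> \<not> pdist P a y < pdist P a b"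
proof -
  have "pdist P a y < per P a" using pdist_prop[OF pX assms] by simp
  then show ?thesis using pdist_b[OF assms] pdist_ba AR5[of "pdist P a b" "per P a" "pdist P a y"]
     m_pos[OF pX ab] m_less[OF pX ab] by simp
qed

lemma cycQ_b_iff: "cyc X Q b y \<longleftrightarrow> cyc X P b y \<and> pdist P b y < pdist P b a"
  using cyc'_a_iff[OF pX ba] unfolding swba .

lemma cycQ_iff: assumes "cyc X P a y"
  shows "cyc X Q y z \<longleftrightarrow> cyc X P a z \<and> (pdist P a y < pdist P a b \<longleftrightarrow> pdist P a z < pdist P a b)"
proof (cases "pdist P a y < pdist P a b")
  case True
  then have "cyc X Q a y" using cyc'_a_iff[OF pX ab] assms by simp
  then have "cyc X Q y z \<longleftrightarrow> cyc X Q a z" using cyc_sym[OF pQ] cyc_trans[OF pQ] by blast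
  then show ?thesis using cyc'_a_iff[OF pX ab] True by simp
next
  case False
  have cb: "cyc X P b y" using cyc_trans[OF pX ba(1) assms] .
  then have "cyc X Q b y" using cycQ_b_iff b_side[OF assms] False by simp
  then have "cyc X Q y z \<longleftrightarrow> cyc X Q b z" using cyc_sym[OF pQ] cyc_trans[OF pQ] by blast
  also have "\<dots> \<longleftrightarrow> cyc X P b z \<and> pdist P b z < pdist P b a" using cycQ_b_iff .
  also have "\<dots> \<longleftrightarrow> cyc X P a z \<and> \<not> pdist P a z < pdist P a b"
  proof -
    have "cyc X P b z \<longleftrightarrow> cyc X P a z" using cyc_a_trans[OF ab(1)] .
    then show ?thesis using b_side by auto
  qed
  finally show ?thesis using False by simp
qed

lemma nu_split: "nu X Q = nu X P + 1"
proof -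
  define Oa where "Oa = {y. cyc X P a y}"
  define O1 where "O1 = {y. cyc X P a y \<and> pdist P a y < pdist P a b}"
  define O2 where "O2 = {y. cyc X P a y \<and> \<not> pdist P a y < pdist P a b}"
  have eqv: "equiv X (Rel X P)" using equiv_Rel[OF pX] .
  have fin: "finite X" using pX by (simp add: permX_def)
  have finq: "finite (X // Rel X P)"
    using fin eqv by (intro finite_quotient) (auto simp: equiv_def)
  have OQ: "Oa \<in> X // Rel X P" unfolding Oa_def using quotientI[OF aX2, of "Rel X P"] by (simp add: Rel_Image)
  have pa: "pdist P a a = 0" using pdist_self[OF pX aX2] .
  have pb: "pdist P a b = pdist P a b" ..
  have aO1: "a \<in> O1" unfolding O1_def using cyc_refl[OF pX aX2] pa m_pos[OF pX ab] by simp
  have bO2: "b \<in> O2" unfolding O2_def using ab by simp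
  have aO2: "a \<notin> O2" unfolding O2_def using pa m_pos[OF pX ab] by simp
  have bO1: "b \<notin> O1" unfolding O1_def by simp
  have classP: "Rel X P `` {x} = Oa" if "x \<in> X" "cyc X P a x" for x
    unfolding Oa_def Rel_Image using cyc_a_trans that by auto
  have O1n: "O1 \<notin> X // Rel X P"
  proof
    assume "O1 \<in> X // Rel X P"
    then obtain x where x: "x \<in> X" "O1 = Rel X P `` {x}" by (auto elim: quotientE)
    then have "cyc X P x a" using aO1 by (simp add: Rel_Image)
    then have "cyc X P a x" using cyc_sym[OF pX] by blast
    then have "O1 = Oa" using x classP by simp
    then show False using bO1 ab(1) unfolding Oa_def by simp
  qed
  have O2n: "O2 \<notin> X // Rel X P"
  proof
    assume "O2 \<in> X // Rel X P"
    then obtain x where x: "x \<in> X" "O2 = Rel X P `` {x}" by (auto elim: quotientE)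
    then have "cyc X P x b" using bO2 by (simp add: Rel_Image)
    then have "cyc X P a x" using cyc_trans[OF pX ab(1) cyc_sym[OF pX]] by blast
    then have "O2 = Oa" using x classP by simp
    then show False using aO2 cyc_refl[OF pX aX2] unfolding Oa_def O2_def using pa m_pos[OF pX ab] by simp
  qed
  have clQ: "Rel X Q `` {x} = (if cyc X P a x then (if pdist P a x < pdist P a b then O1 else O2)
     else Rel X P `` {x})" if x: "x \<in> X" for x
  proof (cases "cyc X P a x")
    case True
    then show ?thesis unfolding Rel_Image O1_def O2_def using cycQ_iff[OF True] by auto
  next
    case False
    then show ?thesis unfolding Rel_Image using outside_cyc[OF pX ab x False] by auto
  qed
  have quotQ: "X // Rel X Q = (X // Rel X P - {Oa}) \<union> {O1, O2}"
  proof
    show "X // Rel X Q \<subseteq> X // Rel X P - {Oa} \<union> {O1, O2}"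
    proof
      fix C assume "C \<in> X // Rel X Q"
      then obtain x where x: "x \<in> X" "C = Rel X Q `` {x}" by (auto elim: quotientE)
      show "C \<in> X // Rel X P - {Oa} \<union> {O1, O2}"
      proof (cases "cyc X P a x")
        case True then show ?thesis using x clQ by auto
      next
        case False
        then have "C = Rel X P `` {x}" using x clQ by simp
        moreover have "Rel X P `` {x} \<noteq> Oa"
          using False cyc_refl[OF pX x(1)] unfolding Oa_def Rel_Image by auto
        ultimately show ?thesis using quotientI[OF x(1)] by auto
      qed
    qed
  next
    show "X // Rel X P - {Oa} \<union> {O1, O2} \<subseteq> X // Rel X Q"
    proof
      fix C assume C: "C \<in> X // Rel X P - {Oa} \<union> {O1, O2}"
      have "O1 = Rel X Q `` {a}" using clQ[OF aX2] cyc_refl[OF pX aX2] pa m_pos[OF pX ab] by simp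
      moreover have "O2 = Rel X Q `` {b}" using clQ[OF bX2] ab(1) by simp
      moreover have "C \<in> X // Rel X Q" if c1: "C \<in> X // Rel X P" and c2: "C \<noteq> Oa"
      proof -
        obtain x where x: "x \<in> X" "C = Rel X P `` {x}" using c1 by (auto elim: quotientE)
        have "\<not> cyc X P a x" using classP[OF x(1)] x(2) c2 by blast
        then have "C = Rel X Q `` {x}" using clQ x by simp
        then show ?thesis using quotientI[OF x(1)] by simp
      qed
      ultimately show "C \<in> X // Rel X Q" using C quotientI[OF aX2] quotientI[OF bX2] by auto
    qed
  qed
  have "O1 \<noteq> O2" using aO1 aO2 by auto
  then have "card (X // Rel X Q) = card (X // Rel X P - {Oa}) + 2"
    unfolding quotQ using O1n O2n finq by (simp add: card_insert_if)
  also have "card (X // Rel X P - {Oa}) = card (X // Rel X P) - 1" using OQ finq by simp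
  finally have e: "card (X // Rel X Q) = card (X // Rel X P) - 1 + 2" .
  have "0 < card (X // Rel X P)" using OQ finq card_gt_0_iff[of "X // Rel X P"] by auto
  then show ?thesis unfolding nu_def using e by simp
qed

end


lemma merge_reach: assumes pX: "permX X P" and aX: "a \<in> X" and bX: "b \<in> X" and nc: "\<not> cyc X P a b"
  shows "cyc X (sw a b \<circ> P) a b"
proof -
  have cond: "\<forall>j. 0 < j \<and> j < per P a \<longrightarrow> (P ^^ j) a \<noteq> a \<and> (P ^^ j) a \<noteq> b"
    using per_min[OF pX] nc cyc_funpow[OF pX aX] by metis
  have "((sw a b \<circ> P) ^^ per P a) a = sw a b ((P ^^ per P a) a)"
    using sw_funpow_last[OF cond per_pos[OF pX aX]] .
  then have "((sw a b \<circ> P) ^^ per P a) a = b" using per_eq[OF pX aX] by (simp add: sw_def)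
  then show ?thesis using cyc_funpow[OF permX_sw[OF pX aX bX] aX, of "per P a"] by simp
qed

lemma nu_merge: assumes pX: "permX X P" and aX: "a \<in> X" and bX: "b \<in> X" and nc: "\<not> cyc X P a b"
  shows "nu X (sw a b \<circ> P) \<le> nu X P"
proof -
  let ?Q = "sw a b \<circ> P"
  have pQ: "permX X ?Q" using permX_sw[OF pX aX bX] .
  have qab: "cyc X ?Q a b" using merge_reach[OF pX aX bX nc] .
  have nc2: "\<not> cyc X P b a" using nc cyc_sym[OF pX] by blast
  have qba: "cyc X ?Q b a" using merge_reach[OF pX bX aX nc2] by (simp add: sw_comm)
  have step: "cyc X ?Q w (P w)" if w: "w \<in> X" for w
  proof -
    have c1: "cyc X ?Q w (?Q w)" using cyc_funpow[OF pQ w, of 1] by simp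
    show ?thesis
    proof (cases "P w = a")
      case True
      then have "?Q w = b" by (simp add: sw_def)
      then show ?thesis using c1 qba True cyc_trans[OF pQ] by metis
    next
      case False
      show ?thesis
      proof (cases "P w = b")
        case True
        then have "?Q w = a" using False by (simp add: sw_def)
        then show ?thesis using c1 qab True cyc_trans[OF pQ] by metis
      next
        case False2: False
        then have "?Q w = P w" using False by (simp add: sw_def)
        then show ?thesis using c1 by simp
      qed
    qed
  qed
  have sub: "cyc X ?Q x ((P ^^ k) x)" if x: "x \<in> X" for x k
  proof (induction k)
    case 0 then show ?case using cyc_refl[OF pQ x] by (simp only: funpow_0)
  next
    case (Suc k)
    have "(P ^^ k) x \<in> X" using permX_funpow_in[OF pX x] .
    then have c2: "cyc X ?Q ((P ^^ k) x) (P ((P ^^ k) x))" using step by blast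
    have e: "(P ^^ Suc k) x = P ((P ^^ k) x)" by simp
    show ?case unfolding e by (rule cyc_trans[OF pQ Suc.IH c2])
  qed
  have "Rel X P \<subseteq> Rel X ?Q" unfolding Rel_def cyc_def using sub unfolding cyc_def by blast
  then show ?thesis unfolding nu_def
    using card_quotient_mono[OF _ equiv_Rel[OF pX] equiv_Rel[OF pQ]] pX by (simp add: permX_def)
qed

context fixes X P a b assumes pX: "permX X P" and ab: "cyc X P a b" "a \<noteq> b"
begin

abbreviation "Q2 \<equiv> sw a b \<circ> P"

lemma crossB: assumes c: "c \<in> X"
  shows "cyc X Q2 c d \<longleftrightarrow> cyc X P c d \<and> \<not> cross X P a b c d"
proof (cases "cyc X P a c")
  case True
  have "cyc X P c d \<longleftrightarrow> cyc X P a d" using cyc_a_trans[OF pX ab True] .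
  then show ?thesis using cycQ_iff[OF pX ab True, of d] ab(1) True unfolding cross_def by auto
next
  case False
  then show ?thesis using outside_cyc[OF pX ab c False] unfolding cross_def by simp
qed

lemma crossC_half:
  assumes ac: "cyc X P a c" "pdist P a c < pdist P a b"
    and cd: "cyc X Q2 c d" and ef: "cyc X Q2 e f"
  shows "cross X Q2 c d e f \<longleftrightarrow> cross X P c d e f"
proof -
  let ?m = "pdist P a b" and ?n = "per P a"
  have pQ: "permX X Q2" using pQ[OF pX ab] .
  have mn: "?m < ?n" using m_less[OF pX ab] .
  have d: "cyc X P a d \<and> pdist P a d < ?m" using cycQ_iff[OF pX ab ac(1)] cd ac(2) by simp
  have qac: "cyc X Q2 a c" using cyc'_a_iff[OF pX ab] ac by simp
  have distP: "pdist P c y = (pdist P a y + ?n - pdist P a c) mod ?n" if "cyc X P a y" for y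
    using pdist_formula[OF pX ac(1) that] .
  have distQ: "pdist Q2 c y = (pdist P a y + ?m - pdist P a c) mod ?m"
    if "cyc X P a y" "pdist P a y < ?m" for y
  proof -
    have qay: "cyc X Q2 a y" using cyc'_a_iff[OF pX ab] that by simp
    have "pdist Q2 c y = (pdist Q2 a y + per Q2 a - pdist Q2 a c) mod per Q2 a"
      using pdist_formula[OF pQ qac qay] .
    then show ?thesis using pdist'_a[OF pX ab] per'_a[OF pX ab] that ac by simp
  qed
  have lt: "pdist P a y < ?n" if "cyc X P a y" for y using pdist_prop[OF pX that] by simp
  show ?thesis
  proof (cases "cyc X P a e \<and> pdist P a e < ?m")
    case True
    have f: "cyc X P a f \<and> pdist P a f < ?m" using cycQ_iff[OF pX ab, of e f] True ef by simp
    have cQ: "cyc X Q2 c d \<and> cyc X Q2 c e \<and> cyc X Q2 c f"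
      using cycQ_iff[OF pX ab ac(1)] ac(2) d True f by simp
    have cP: "cyc X P c d \<and> cyc X P c e \<and> cyc X P c f"
      using cyc_a_trans[OF pX ab ac(1)] d True f by simp
    have e1: "(pdist Q2 c e < pdist Q2 c d) \<longleftrightarrow> (pdist P c e < pdist P c d)"
      using distQ distP d True ac AR2[of "pdist P a c" ?m "pdist P a d" "pdist P a e" ?n] mn by simp
    have e2: "(pdist Q2 c f < pdist Q2 c d) \<longleftrightarrow> (pdist P c f < pdist P c d)"
      using distQ distP d f ac AR2[of "pdist P a c" ?m "pdist P a d" "pdist P a f" ?n] mn by simp
    show ?thesis unfolding cross_def using cQ cP e1 e2 by simp
  next
    case False
    have nQ: "\<not> cyc X Q2 c e" using cycQ_iff[OF pX ab ac(1)] ac(2) False by simp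
    have nP: "\<not> cross X P c d e f"
    proof (cases "cyc X P a e")
      case False2: False
      then have "\<not> cyc X P c e" using cyc_a_trans[OF pX ab ac(1)] by simp
      then show ?thesis unfolding cross_def by simp
    next
      case True
      then have pe: "\<not> pdist P a e < ?m" using False by simp
      have f: "cyc X P a f \<and> \<not> pdist P a f < ?m" using cycQ_iff[OF pX ab True, of f] ef pe by simp
      have ar: "((pdist P a e + ?n - pdist P a c) mod ?n < (pdist P a d + ?n - pdist P a c) mod ?n) \<longleftrightarrow>
          ((pdist P a f + ?n - pdist P a c) mod ?n < (pdist P a d + ?n - pdist P a c) mod ?n)"
        by (rule AR3) (use ac d pe f lt[OF True] lt[of f] in auto)
      have "(pdist P c e < pdist P c d) \<longleftrightarrow> (pdist P c f < pdist P c d)"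
        using ar distP[OF True] distP[of d] distP[of f] d f by simp
      then show ?thesis unfolding cross_def by simp
    qed
    show ?thesis unfolding cross_def using nQ nP unfolding cross_def by simp
  qed
qed

end

context fixes X P a b assumes pX: "permX X P" and ab: "cyc X P a b" "a \<noteq> b"
begin

lemma crossC: assumes c: "c \<in> X" and cd: "cyc X (sw a b \<circ> P) c d" and ef: "cyc X (sw a b \<circ> P) e f"
  shows "cross X (sw a b \<circ> P) c d e f \<longleftrightarrow> cross X P c d e f"
proof (cases "cyc X P a c")
  case False
  show ?thesis unfolding cross_def
    using outside_cyc[OF pX ab c False] outside_pdist[OF pX ab c False] by simp
next
  case True
  show ?thesis
  proof (cases "pdist P a c < pdist P a b")
    case True2: True
    show ?thesis using crossC_half[OF pX ab True True2 cd ef] .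
  next
    case False
    have bc: "cyc X P b c" using cyc_trans[OF pX ba(1)[OF pX ab] True] .
    have lt: "pdist P b c < pdist P b a" using b_side[OF pX ab True] False by simp
    have sw: "sw b a = sw a b" by (rule sw_comm)
    have cd': "cyc X (sw b a \<circ> P) c d" and ef': "cyc X (sw b a \<circ> P) e f" using cd ef sw by simp_all
    have "cross X (sw b a \<circ> P) c d e f \<longleftrightarrow> cross X P c d e f"
      using crossC_half[OF pX ba[OF pX ab] bc lt cd' ef'] .
    then show ?thesis using sw by simp
  qed
qed

lemma cross_sym1: "cross X P a b c d \<longleftrightarrow> cross X P b a c d"
proof (cases "cyc X P a c \<and> cyc X P a d")
  case True
  then have "cyc X P b c \<and> cyc X P b d" using cyc_a_trans[OF pX ab ab(1)] by simp
  then show ?thesis unfolding cross_def using True b_side[OF pX ab] ab ba[OF pX ab] by auto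
next
  case False
  then have "\<not> (cyc X P b c \<and> cyc X P b d)" using cyc_a_trans[OF pX ab ab(1)] by simp
  then show ?thesis unfolding cross_def using False by auto
qed

lemma cross_sym2: assumes dist: "c \<noteq> a" "c \<noteq> b" "d \<noteq> a" "d \<noteq> b" "c \<noteq> d"
  shows "cross X P a b c d \<longleftrightarrow> cross X P c d a b"
proof (cases "cyc X P a c \<and> cyc X P a d")
  case False
  have "\<not> cross X P c d a b"
  proof
    assume "cross X P c d a b"
    then have "cyc X P c d" "cyc X P c a" unfolding cross_def by auto
    then show False using False cyc_sym[OF pX] cyc_trans[OF pX] by blast
  qed
  then show ?thesis using False unfolding cross_def by auto
next
  case True
  let ?n = "per P a" and ?m = "pdist P a b" and ?pc = "pdist P a c" and ?pd = "pdist P a d"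
  have aX: "a \<in> X" using cyc_in[OF pX ab(1)] by simp
  have inj: "y = z" if "cyc X P a y" "cyc X P a z" "pdist P a y = pdist P a z" for y z
    using pdist_prop[OF pX that(1)] pdist_prop[OF pX that(2)] that(3) by metis
  have pc0: "0 < ?pc" using pdist_zero[OF pX] True dist by blast
  have pd0: "0 < ?pd" using pdist_zero[OF pX] True dist by blast
  have m0: "0 < ?m" using m_pos[OF pX ab] .
  have mc: "?m \<noteq> ?pc" using inj[of b c] ab True dist by auto
  have md: "?m \<noteq> ?pd" using inj[of b d] ab True dist by auto
  have cd: "?pc \<noteq> ?pd" using inj[of c d] True dist by auto
  have lts: "?m < ?n" "?pc < ?n" "?pd < ?n" using m_less[OF pX ab] pdist_prop[OF pX] True by auto
  have ca: "pdist P c a = (0 + ?n - ?pc) mod ?n"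
    using pdist_formula[OF pX True[THEN conjunct1] cyc_refl[OF pX aX]] pdist_self[OF pX aX] by simp
  have cb: "pdist P c b = (?m + ?n - ?pc) mod ?n"
    using pdist_formula[OF pX True[THEN conjunct1] ab(1)] .
  have cdd: "pdist P c d = (?pd + ?n - ?pc) mod ?n"
    using pdist_formula[OF pX True[THEN conjunct1] True[THEN conjunct2]] .
  have cycs: "cyc X P c d" "cyc X P c a" "cyc X P c b"
    using True ab(1) cyc_sym[OF pX] cyc_trans[OF pX] by blast+
  have "((?pc < ?m) \<noteq> (?pd < ?m)) \<longleftrightarrow>
    (((0 + ?n - ?pc) mod ?n < (?pd + ?n - ?pc) mod ?n) \<noteq> ((?m + ?n - ?pc) mod ?n < (?pd + ?n - ?pc) mod ?n))"
    by (rule AR4) (use lts pc0 pd0 m0 mc md cd in auto)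
  then show ?thesis unfolding cross_def using True ab(1) cycs ca cb cdd by simp
qed

end

definition pelems :: "('a \<times> 'a) list \<Rightarrow> 'a list" where
  "pelems ps = concat (map (\<lambda>(a, b). [a, b]) ps)"

fun Qf :: "('a \<times> 'a) list \<Rightarrow> ('a \<Rightarrow> 'a) \<Rightarrow> ('a \<Rightarrow> 'a)" where
  "Qf [] P = P"
| "Qf ((a, b) # ps) P = Qf ps (sw a b \<circ> P)"

definition good :: "'a set \<Rightarrow> ('a \<Rightarrow> 'a) \<Rightarrow> ('a \<times> 'a) list \<Rightarrow> bool" where
  "good X P ps \<longleftrightarrow> (\<forall>(a, b)\<in>set ps. cyc X P a b) \<and>
     (\<forall>(a, b)\<in>set ps. \<forall>(c, d)\<in>set ps. (a, b) \<noteq> (c, d) \<longrightarrow> \<not> cross X P a b c d)"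

lemma pelems_Cons: "pelems ((a, b) # ps) = a # b # pelems ps"
  by (simp add: pelems_def)

lemma pelems_mem: "(c, d) \<in> set ps \<Longrightarrow> c \<in> set (pelems ps) \<and> d \<in> set (pelems ps)"
  by (auto simp: pelems_def)

lemma good_iff: "good X P ps \<longleftrightarrow> (\<forall>a b. (a, b) \<in> set ps \<longrightarrow> cyc X P a b) \<and>
   (\<forall>a b c d. (a, b) \<in> set ps \<longrightarrow> (c, d) \<in> set ps \<longrightarrow> (a, b) \<noteq> (c, d) \<longrightarrow> \<not> cross X P a b c d)"
  unfolding good_def by fast

lemma lemA:
  assumes "permX X P" "distinct (pelems ps)" "set (pelems ps) \<subseteq> X"
  shows "nu X (Qf ps P) \<le> nu X P + length ps \<and>
         (nu X (Qf ps P) = nu X P + length ps \<longleftrightarrow> good X P ps)"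
  using assms
proof (induction ps arbitrary: P)
  case Nil
  then show ?case by (simp add: good_def)
next
  case (Cons p rest)
  obtain a b where p: "p = (a, b)" by (cases p)
  have pX: "permX X P" using Cons.prems by simp
  have dis: "distinct (pelems rest)" "a \<notin> set (pelems rest)" "b \<notin> set (pelems rest)" "a \<noteq> b"
    using Cons.prems(2) by (auto simp: p pelems_Cons)
  have sub: "set (pelems rest) \<subseteq> X" "a \<in> X" "b \<in> X" using Cons.prems(3) by (auto simp: p pelems_Cons)
  let ?Q = "sw a b \<circ> P"
  have pQ: "permX X ?Q" using permX_sw[OF pX sub(2,3)] .
  have IH: "nu X (Qf rest ?Q) \<le> nu X ?Q + length rest \<and>
       (nu X (Qf rest ?Q) = nu X ?Q + length rest \<longleftrightarrow> good X ?Q rest)"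
    using Cons.IH[OF pQ dis(1) sub(1)] .
  have Qf: "Qf (p # rest) P = Qf rest ?Q" by (simp add: p)
  show ?case
  proof (cases "cyc X P a b")
    case False
    have "nu X ?Q \<le> nu X P" using nu_merge[OF pX sub(2,3) False] .
    moreover have "\<not> good X P (p # rest)" using False by (simp add: good_def p)
    ultimately show ?thesis using IH Qf by auto
  next
    case True
    have nuQ: "nu X ?Q = nu X P + 1" using nu_split[OF pX True dis(4)] .
    have rest_props: "c \<in> X \<and> d \<in> X \<and> c \<noteq> a \<and> c \<noteq> b \<and> d \<noteq> a \<and> d \<noteq> b \<and> c \<noteq> d"
      if cdr: "(c, d) \<in> set rest" for c d
    proof -
      have "c \<in> set (pelems rest) \<and> d \<in> set (pelems rest)" using pelems_mem[OF cdr] .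
      moreover have "c \<noteq> d"
      proof -
        obtain xs ys where "rest = xs @ (c, d) # ys" using cdr by (meson split_list)
        then show ?thesis using dis(1) by (auto simp: pelems_def)
      qed
      ultimately show ?thesis using sub dis by auto
    qed
    have ab_notin: "(a, b) \<notin> set rest" using dis(2) pelems_mem by fastforce
    have B: "cyc X ?Q c d \<longleftrightarrow> cyc X P c d \<and> \<not> cross X P a b c d" if "(c, d) \<in> set rest" for c d
      using crossB[OF pX True dis(4)] rest_props[OF that] by simp
    have S2: "cross X P c d a b \<longleftrightarrow> cross X P a b c d" if "(c, d) \<in> set rest" for c d
      using cross_sym2[OF pX True dis(4)] rest_props[OF that] by simp
    have C: "cross X ?Q c d e f \<longleftrightarrow> cross X P c d e f"
      if "(c, d) \<in> set rest" "(e, f) \<in> set rest" "cyc X ?Q c d" "cyc X ?Q e f" for c d e f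
      using crossC[OF pX True dis(4)] rest_props[OF that(1)] that(3,4) by simp
    have "good X ?Q rest \<longleftrightarrow> good X P (p # rest)"
    proof
      assume g: "good X ?Q rest"
      have cq: "cyc X ?Q c d" if "(c, d) \<in> set rest" for c d using g that unfolding good_iff by auto
      have nq: "\<not> cross X ?Q c d e f" if "(c, d) \<in> set rest" "(e, f) \<in> set rest" "(c, d) \<noteq> (e, f)"
        for c d e f using g that unfolding good_iff by blast
      show "good X P (p # rest)" unfolding good_iff p
      proof (intro conjI allI impI)
        fix c d assume "(c, d) \<in> set ((a, b) # rest)"
        then show "cyc X P c d" using True B cq by auto
      next
        fix c d e f assume xe: "(c, d) \<in> set ((a, b) # rest)" and ye: "(e, f) \<in> set ((a, b) # rest)"
          and ne: "(c, d) \<noteq> (e, f)"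
        consider "(c, d) = (a, b)" "(e, f) \<in> set rest" | "(e, f) = (a, b)" "(c, d) \<in> set rest"
          | "(c, d) \<in> set rest" "(e, f) \<in> set rest" using ne ye xe by auto
        then show "\<not> cross X P c d e f"
        proof cases
          case 1 then show ?thesis using B cq by auto
        next
          case 2 then show ?thesis using B cq S2 by auto
        next
          case 3
          then show ?thesis using C[OF 3 cq[OF 3(1)] cq[OF 3(2)]] nq[OF 3 ne] by simp
        qed
      qed
    next
      assume g: "good X P (p # rest)"
      have cP: "cyc X P c d" if "(c, d) \<in> set rest" for c d using g that unfolding good_iff p by auto
      have g2: "\<forall>a' b' c d. (a', b') \<in> set ((a, b) # rest) \<longrightarrow> (c, d) \<in> set ((a, b) # rest) \<longrightarrow>
          (a', b') \<noteq> (c, d) \<longrightarrow> \<not> cross X P a' b' c d" using g unfolding good_iff p by blast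
      have nc: "\<not> cross X P a b c d" if cdr: "(c, d) \<in> set rest" for c d
      proof -
        have "(a, b) \<noteq> (c, d)" using cdr ab_notin by auto
        then show ?thesis using g2[rule_format, of a b c d] cdr by simp
      qed
      have ncr: "\<not> cross X P c d e f" if "(c, d) \<in> set rest" "(e, f) \<in> set rest" "(c, d) \<noteq> (e, f)"
        for c d e f using g that unfolding good_iff p by auto
      have cq: "cyc X ?Q c d" if "(c, d) \<in> set rest" for c d using B[OF that] cP[OF that] nc[OF that] by simp
      show "good X ?Q rest" unfolding good_iff
      proof (intro conjI allI impI)
        fix c d assume "(c, d) \<in> set rest"
        then show "cyc X ?Q c d" using cq by auto
      next
        fix c d e f assume x: "(c, d) \<in> set rest" and y: "(e, f) \<in> set rest" and ne: "(c, d) \<noteq> (e, f)"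
        show "\<not> cross X ?Q c d e f" using C[OF x y cq[OF x] cq[OF y]] ncr[OF x y ne] by simp
      qed
    qed
    then show ?thesis using IH Qf nuQ by auto
  qed
qed


lemma hflip_hflip[simp]: "hflip (hflip h) = h" by (simp add: hflip_def)
lemma hflip_neq: "hflip h \<noteq> h" by (simp add: hflip_def prod_eq_iff)
lemma hflip_in: "h \<in> halves G H \<Longrightarrow> hflip h \<in> halves G H"
  by (auto simp: halves_def hflip_def)
lemma isGh_hflip[simp]: "isGh (hflip h) = isGh h" by (simp add: isGh_def hflip_def)

lemma finite_halves: assumes "finite (edges G)" "finite (edges H)" shows "finite (halves G H)"
proof -
  have "halves G H \<subseteq> ((Inl ` edges G) \<union> (Inr ` edges H)) \<times> UNIV" by (auto simp: halves_def)
  moreover have "finite (((Inl ` edges G) \<union> (Inr ` edges H)) \<times> (UNIV :: bool set))" using assms by simp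
  ultimately show ?thesis by (rule finite_subset)
qed

definition invol :: "('v,'a) mgraph \<Rightarrow> ('v,'b) mgraph \<Rightarrow> (('a,'b) half \<Rightarrow> ('a,'b) half) \<Rightarrow> bool" where
  "invol G H N \<longleftrightarrow> (\<forall>h\<in>halves G H. N h \<in> halves G H \<and> N h \<noteq> h \<and> N (N h) = h)
     \<and> (\<forall>h. h \<notin> halves G H \<longrightarrow> N h = h)"

context fixes G :: "('v,'a) mgraph" and H :: "('v,'b) mgraph" and N
  assumes inv: "invol G H N" and finX: "finite (halves G H)"
begin

abbreviation "X \<equiv> halves G H"
abbreviation "T \<equiv> Tstep N"

lemma N_in: "h \<in> X \<Longrightarrow> N h \<in> X" using inv by (simp add: invol_def)
lemma N_neq: "h \<in> X \<Longrightarrow> N h \<noteq> h" using inv by (simp add: invol_def)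
lemma N_out: "h \<notin> X \<Longrightarrow> N h = h" using inv unfolding invol_def by blast
lemma N_N[simp]: "N (N h) = h"
proof (cases "h \<in> X")
  case True then show ?thesis using inv unfolding invol_def by blast
next
  case False then show ?thesis using N_out by simp
qed

lemma T_apply: "T h = N (hflip h)" by (simp add: Tstep_def)

lemma pT: "permX X T"
proof -
  have "inj_on T X"
  proof (rule inj_onI)
    fix x y assume "x \<in> X" "y \<in> X" "T x = T y"
    then have "N (N (hflip x)) = N (N (hflip y))" by (simp add: T_apply)
    then have "hflip (hflip x) = hflip (hflip y)" by simp
    then show "x = y" by simp
  qed
  moreover have "\<forall>x\<in>X. T x \<in> X" using N_in hflip_in unfolding T_apply by blast
  ultimately show ?thesis using finX unfolding permX_def by blast
qed

lemma T_flip_T: "T (hflip (T z)) = hflip z"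
  by (simp add: T_apply)

lemma bip: assumes x: "x \<in> X" shows "(T ^^ k) x \<noteq> hflip x"
proof
  assume eq: "(T ^^ k) x = hflip x"
  have key: "j \<le> k \<Longrightarrow> hflip ((T ^^ j) x) = (T ^^ (k - j)) x" for j
  proof (induction j)
    case 0 then show ?case using eq by simp
  next
    case (Suc j)
    then have ih: "hflip ((T ^^ j) x) = (T ^^ (k - j)) x" by simp
    have kj: "k - j = Suc (k - Suc j)" using Suc.prems by simp
    have "(T ^^ (k - j)) x = T ((T ^^ (k - Suc j)) x)" unfolding kj by simp
    then have "(T ^^ (k - j)) x = N (hflip ((T ^^ (k - Suc j)) x))" using T_apply[of "(T ^^ (k - Suc j)) x"] by simp
    then have "N ((T ^^ (k - j)) x) = hflip ((T ^^ (k - Suc j)) x)" by simp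
    then have h1: "hflip (N (hflip ((T ^^ j) x))) = (T ^^ (k - Suc j)) x" using ih by simp
    have e1: "(T ^^ Suc j) x = N (hflip ((T ^^ j) x))" using T_apply[of "(T ^^ j) x"] by simp
    show ?case using e1 h1 by simp
  qed
  have "k = 2 * (k div 2) \<or> k = 2 * (k div 2) + 1" by presburger
  then obtain i where "k = 2 * i \<or> k = 2 * i + 1" by blast
  then show False
  proof
    assume k: "k = 2 * i"
    have "hflip ((T ^^ i) x) = (T ^^ i) x" using key[of i] k by simp
    then show False using hflip_neq by metis
  next
    assume k: "k = 2 * i + 1"
    have "hflip ((T ^^ i) x) = (T ^^ (Suc i)) x" using key[of i] k by (simp add: Suc_diff_le)
    then have "hflip ((T ^^ i) x) = N (hflip ((T ^^ i) x))" using T_apply[of "(T ^^ i) x"] by simp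
    moreover have "hflip ((T ^^ i) x) \<in> X" using hflip_in permX_funpow_in[OF pT x] by blast
    ultimately show False using N_neq by metis
  qed
qed

lemma not_cyc_flip: "\<not> cyc X T x (hflip x)"
  using bip unfolding cyc_def by blast

lemma mirror: assumes "cyc X T x y" shows "cyc X T (hflip y) (hflip x)"
proof -
  obtain k where k: "(T ^^ k) x = y" and x: "x \<in> X" using assms unfolding cyc_def by auto
  have "(T ^^ k) (hflip ((T ^^ k) z)) = hflip z" for z
  proof (induction k arbitrary: z)
    case 0 then show ?case by simp
  next
    case (Suc k)
    have "(T ^^ Suc k) (hflip ((T ^^ Suc k) z)) = (T ^^ k) (T (hflip (T ((T ^^ k) z))))"
      by (simp add: funpow_swap1)
    also have "\<dots> = (T ^^ k) (hflip ((T ^^ k) z))" by (simp add: T_flip_T)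
    finally show ?case using Suc by simp
  qed
  then have "(T ^^ k) (hflip y) = hflip x" using k by blast
  moreover have "hflip y \<in> X" using hflip_in cyc_in[OF pT assms] by blast
  ultimately show ?thesis unfolding cyc_def by blast
qed

lemma N_cyc: assumes h: "h \<in> X" shows "cyc X T (hflip h) (N h)"
proof -
  have "cyc X T (hflip h) ((T ^^ 1) (hflip h))" using cyc_funpow[OF pT hflip_in[OF h]] .
  then show ?thesis using T_apply[of "hflip h"] by simp
qed

lemma not_cyc_N: "h \<in> X \<Longrightarrow> \<not> cyc X T h (N h)"
  using N_cyc not_cyc_flip cyc_sym[OF pT] cyc_trans[OF pT] by blast

lemma conn_step: "h \<in> X \<Longrightarrow> (h, T h) \<in> conn G H N"
proof -
  assume h: "h \<in> X"
  have "(h, hflip h) \<in> gamma_rel G H N" using h unfolding gamma_rel_def by blast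
  moreover have "(hflip h, N (hflip h)) \<in> gamma_rel G H N" using hflip_in[OF h] unfolding gamma_rel_def by blast
  ultimately show ?thesis unfolding conn_def T_apply by (meson UnI1 converse_rtrancl_into_rtrancl r_into_rtrancl)
qed

lemma cyc_conn: assumes "cyc X T x y" shows "(x, y) \<in> conn G H N"
proof -
  obtain k where k: "(T ^^ k) x = y" and x: "x \<in> X" using assms unfolding cyc_def by auto
  have "(x, (T ^^ k) x) \<in> conn G H N" for k
  proof (induction k)
    case 0 then show ?case by (simp add: conn_def)
  next
    case (Suc k)
    have "((T ^^ k) x, T ((T ^^ k) x)) \<in> conn G H N" using conn_step permX_funpow_in[OF pT x] by blast
    then show ?case using Suc unfolding conn_def by simp
  qed
  then show ?thesis using k by blast
qed

lemma conn_sym: "(x, y) \<in> conn G H N \<Longrightarrow> (y, x) \<in> conn G H N"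
  unfolding conn_def by (metis converse_Un converse_converse rtrancl_converseI sup_commute)

lemma conn_flip: "x \<in> X \<Longrightarrow> (x, hflip x) \<in> conn G H N"
  unfolding conn_def gamma_rel_def by (rule r_into_rtrancl) blast

lemma conn_class: assumes x: "x \<in> X"
  shows "conn G H N `` {x} = {y. cyc X T x y \<or> cyc X T (hflip x) y}"
proof
  show "{y. cyc X T x y \<or> cyc X T (hflip x) y} \<subseteq> conn G H N `` {x}"
  proof
    fix y assume "y \<in> {y. cyc X T x y \<or> cyc X T (hflip x) y}"
    then have cy: "cyc X T x y \<or> cyc X T (hflip x) y" by simp
    have "(x, y) \<in> conn G H N"
    proof (cases "cyc X T x y")
      case True then show ?thesis by (rule cyc_conn)
    next
      case False
      then have "cyc X T (hflip x) y" using cy by simp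
      then have h2: "(hflip x, y) \<in> conn G H N" by (rule cyc_conn)
      show ?thesis using conn_flip[OF x] h2 unfolding conn_def by (rule rtrancl_trans)
    qed
    then show "y \<in> conn G H N `` {x}" by simp
  qed
next
  let ?K = "{y. cyc X T x y \<or> cyc X T (hflip x) y}"
  have closed: "z \<in> ?K" if y: "y \<in> ?K" and r: "(y, z) \<in> gamma_rel G H N \<union> (gamma_rel G H N)\<inverse>" for y z
  proof -
    have yX: "y \<in> X" using y cyc_in[OF pT] by blast
    have fl: "hflip y \<in> ?K"
      using y mirror cyc_sym[OF pT] hflip_hflip by fastforce
    have nn: "N y \<in> ?K" using fl N_cyc[OF yX] cyc_trans[OF pT] by blast
    have "(\<exists>h. y = h \<and> z = hflip h) \<or> (\<exists>h. y = h \<and> z = N h) \<or> (\<exists>h. z = h \<and> y = hflip h) \<or> (\<exists>h. z = h \<and> y = N h)"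
      using r unfolding gamma_rel_def by blast
    then have "z = hflip y \<or> z = N y" by (metis hflip_hflip N_N)
    then show ?thesis using fl nn by auto
  qed
  show "conn G H N `` {x} \<subseteq> ?K"
  proof
    fix z assume "z \<in> conn G H N `` {x}"
    then have "(x, z) \<in> conn G H N" by simp
    then show "z \<in> ?K" unfolding conn_def
    proof (induction rule: rtrancl_induct)
      case base then show ?case using cyc_refl[OF pT x] by simp
    next
      case (step y z) then show ?case using closed by blast
    qed
  qed
qed


definition "EE = {(x, y). x \<in> X \<and> (cyc X T x y \<or> cyc X T (hflip x) y)}"

lemma EE_Image: "x \<in> X \<Longrightarrow> EE `` {x} = conn G H N `` {x}"
  using conn_class by (auto simp: EE_def)

lemma equiv_EE: "equiv X EE"
proof (rule equivI)
  show "EE \<subseteq> X \<times> X" unfolding EE_def using cyc_in[OF pT] by blast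
  show "refl_on X EE" unfolding refl_on_def EE_def using cyc_refl[OF pT] by blast
  show "sym EE" unfolding sym_def EE_def
  proof (intro allI impI)
    fix x y assume "(x, y) \<in> {(x, y). x \<in> X \<and> (cyc X T x y \<or> cyc X T (hflip x) y)}"
    then have xy: "x \<in> X" "cyc X T x y \<or> cyc X T (hflip x) y" by auto
    then have yX: "y \<in> X" using cyc_in[OF pT] by blast
    have "cyc X T y x \<or> cyc X T (hflip y) x"
      using xy cyc_sym[OF pT, of x y] mirror[of "hflip x" y] by (simp, blast)
    then show "(y, x) \<in> {(x, y). x \<in> X \<and> (cyc X T x y \<or> cyc X T (hflip x) y)}" using yX by simp
  qed
  show "trans EE" unfolding trans_def EE_def
  proof (intro allI impI)
    fix x y z assume a1: "(x, y) \<in> {(x, y). x \<in> X \<and> (cyc X T x y \<or> cyc X T (hflip x) y)}"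
      and a2: "(y, z) \<in> {(x, y). x \<in> X \<and> (cyc X T x y \<or> cyc X T (hflip x) y)}"
    then have x: "x \<in> X" and xy: "cyc X T x y \<or> cyc X T (hflip x) y"
      and yz: "cyc X T y z \<or> cyc X T (hflip y) z" by auto
    have "cyc X T x z \<or> cyc X T (hflip x) z"
    proof (cases "cyc X T x y")
      case True
      note c1 = True
      show ?thesis
      proof (cases "cyc X T y z")
        case True then show ?thesis using c1 cyc_trans[OF pT] by blast
      next
        case False
        then have "cyc X T (hflip y) z" using yz by simp
        moreover have "cyc X T (hflip x) (hflip y)" using mirror[OF c1] cyc_sym[OF pT] by blast
        ultimately show ?thesis using cyc_trans[OF pT] by blast
      qed
    next
      case False
      then have c1: "cyc X T (hflip x) y" using xy by simp
      show ?thesis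
      proof (cases "cyc X T y z")
        case True then show ?thesis using c1 cyc_trans[OF pT] by blast
      next
        case False
        then have "cyc X T (hflip y) z" using yz by simp
        moreover have "cyc X T x (hflip y)" using mirror[OF c1] cyc_sym[OF pT] by simp
        ultimately show ?thesis using cyc_trans[OF pT] by blast
      qed
    qed
    then show "(x, z) \<in> {(x, y). x \<in> X \<and> (cyc X T x y \<or> cyc X T (hflip x) y)}" using x by simp
  qed
qed

lemma cycles_nu: "2 * cycles G H N = nu X T"
proof -
  let ?R = "Rel X T"
  have eqR: "equiv X ?R" using equiv_Rel[OF pT] .
  have eqE: "equiv X EE" using equiv_EE .
  have qc: "X // conn G H N = X // EE"
    unfolding quotient_def using EE_Image by auto
  define f where "f K = {D \<in> X // ?R. D \<subseteq> K}" for K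
  have fx: "f (EE `` {x}) = {?R `` {x}, ?R `` {hflip x}}" if x: "x \<in> X" for x
  proof
    have Ex: "EE `` {x} = {y. cyc X T x y \<or> cyc X T (hflip x) y}" using x by (auto simp: EE_def)
    show "{?R `` {x}, ?R `` {hflip x}} \<subseteq> f (EE `` {x})"
      unfolding f_def Ex Rel_Image using quotientI[OF x, of ?R] quotientI[OF hflip_in[OF x], of ?R]
      by (auto simp: Rel_Image)
    show "f (EE `` {x}) \<subseteq> {?R `` {x}, ?R `` {hflip x}}"
    proof
      fix D assume "D \<in> f (EE `` {x})"
      then obtain y where y: "y \<in> X" "D = ?R `` {y}" "D \<subseteq> EE `` {x}"
        unfolding f_def by (auto elim: quotientE)
      then have "y \<in> EE `` {x}" using cyc_refl[OF pT y(1)] by (auto simp: Rel_Image)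
      then have "cyc X T x y \<or> cyc X T (hflip x) y" using Ex by simp
      then have "?R `` {y} = ?R `` {x} \<or> ?R `` {y} = ?R `` {hflip x}"
        using eqR y(1) x hflip_in[OF x] unfolding Rel_def
        by (metis (no_types, lifting) case_prodI equiv_class_eq_iff mem_Collect_eq)
      then show "D \<in> {?R `` {x}, ?R `` {hflip x}}" using y by simp
    qed
  qed
  have card2: "card (f K) = 2" if KE: "K \<in> X // EE" for K
  proof -
    obtain x where x: "x \<in> X" "K = EE `` {x}" using KE by (auto elim: quotientE)
    have "?R `` {x} \<noteq> ?R `` {hflip x}"
      using not_cyc_flip[of x] cyc_refl[OF pT hflip_in[OF x(1)]] by (auto simp: Rel_Image)
    then show ?thesis using fx[OF x(1)] x(2) by simp
  qed
  have inj: "inj_on f (X // EE)"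
  proof (rule inj_onI)
    fix K1 K2 assume K1: "K1 \<in> X // EE" and K2: "K2 \<in> X // EE" and eq: "f K1 = f K2"
    obtain x1 where x1: "x1 \<in> X" "K1 = EE `` {x1}" using K1 by (auto elim: quotientE)
    have "?R `` {x1} \<in> f K1" using fx[OF x1(1)] x1(2) by simp
    then have "?R `` {x1} \<subseteq> K2" using eq unfolding f_def by auto
    then have "x1 \<in> K2" using cyc_refl[OF pT x1(1)] by (auto simp: Rel_Image)
    then have "x1 \<in> K1 \<inter> K2" using x1 eqE by (auto simp: equiv_def refl_on_def)
    then show "K1 = K2" using quotient_disj[OF eqE K1 K2] by auto
  qed
  have disj: "\<forall>c1\<in>f ` (X // EE). \<forall>c2\<in>f ` (X // EE). c1 \<noteq> c2 \<longrightarrow> c1 \<inter> c2 = {}"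
  proof (intro ballI impI)
    fix c1 c2 assume c1: "c1 \<in> f ` (X // EE)" and c2: "c2 \<in> f ` (X // EE)" and ne: "c1 \<noteq> c2"
    obtain K1 where K1: "K1 \<in> X // EE" "c1 = f K1" using c1 by auto
    obtain K2 where K2: "K2 \<in> X // EE" "c2 = f K2" using c2 by auto
    show "c1 \<inter> c2 = {}"
    proof (rule ccontr)
      assume "c1 \<inter> c2 \<noteq> {}"
      then obtain D where D: "D \<in> X // ?R" "D \<subseteq> K1" "D \<subseteq> K2" using K1 K2 unfolding f_def by auto
      have "D \<noteq> {}" using in_quotient_imp_non_empty[OF eqR D(1)] .
      then have "K1 \<inter> K2 \<noteq> {}" using D by auto
      then have "K1 = K2" using quotient_disj[OF eqE K1(1) K2(1)] by auto
      then show False using ne K1 K2 by simp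
    qed
  qed
  have un: "\<Union> (f ` (X // EE)) = X // ?R"
  proof
    show "\<Union> (f ` (X // EE)) \<subseteq> X // ?R" unfolding f_def by auto
    show "X // ?R \<subseteq> \<Union> (f ` (X // EE))"
    proof
      fix D assume D: "D \<in> X // ?R"
      then obtain y where y: "y \<in> X" "D = ?R `` {y}" by (auto elim: quotientE)
      have "D \<subseteq> EE `` {y}" using y by (auto simp: Rel_Image EE_def)
      then have "D \<in> f (EE `` {y})" using D unfolding f_def by simp
      then show "D \<in> \<Union> (f ` (X // EE))" using quotientI[OF y(1)] by auto
    qed
  qed
  have finE: "finite (X // EE)" using finX eqE by (intro finite_quotient) (auto simp: equiv_def)
  have finR: "finite (X // ?R)" using finX eqR by (intro finite_quotient) (auto simp: equiv_def)
  have finC: "finite (f ` (X // EE))" using finE by simp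
  have c2': "\<forall>c\<in>f ` (X // EE). card c = 2" using card2 by auto
  have fu: "finite (\<Union> (f ` (X // EE)))" using un finR by simp
  have "2 * card (f ` (X // EE)) = card (\<Union> (f ` (X // EE)))"
    using card_partition[OF finC fu c2'[rule_format] disj[rule_format]] .
  then have "2 * card (X // EE) = card (X // ?R)" using card_image[OF inj] un by simp
  then show ?thesis unfolding cycles_def nu_def qc .
qed

end


lemma Gset_eq: "{h \<in> halves G H. isGh h \<and> hvtx G H h = v} =
   (\<lambda>(a, s). (Inl a, s)) ` {(a, s). a \<in> edges G \<and> ep G a s = v}"
  by (auto simp: halves_def isGh_def hvtx_def image_iff)

lemma Hset_eq: "{h \<in> halves G H. \<not> isGh h \<and> hvtx G H h = v} =
   (\<lambda>(b, s). (Inr b, s)) ` {(b, s). b \<in> edges H \<and> ep H b s = v}"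
  by (auto simp: halves_def isGh_def hvtx_def image_iff)

lemma card_Gset: "card {h \<in> halves G H. isGh h \<and> hvtx G H h = v} = deg G v"
  unfolding Gset_eq deg_def by (rule card_image) (auto simp: inj_on_def)

lemma card_Hset: "card {h \<in> halves G H. \<not> isGh h \<and> hvtx G H h = v} = deg H v"
  unfolding Hset_eq deg_def by (rule card_image) (auto simp: inj_on_def)

definition og :: "('v,'a) mgraph \<Rightarrow> ('v,'b) mgraph \<Rightarrow> ('a,'b) half \<Rightarrow> ('a,'b) half" where
  "og G H h = (THE h'. h' \<in> halves G H \<and> hvtx G H h' = hvtx G H h \<and> h' \<noteq> h \<and> isGh h' = isGh h)"

lemma flipS_og: "flipS G H M S h = (if h \<in> halves G H \<and> hvtx G H h \<in> S then og G H h else M h)"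
  by (simp add: flipS_def og_def)

fun sig :: "('a \<times> 'a) list \<Rightarrow> 'a \<Rightarrow> 'a" where
  "sig [] = id"
| "sig ((a, b) # ps) = sig ps \<circ> sw a b"

lemma Qf_sig: "Qf ps P = sig ps \<circ> P"
proof (induction ps arbitrary: P)
  case Nil then show ?case by simp
next
  case (Cons p ps) then show ?case by (cases p) (simp add: comp_assoc)
qed

lemma sig_out: "z \<notin> set (pelems ps) \<Longrightarrow> sig ps z = z"
proof (induction ps)
  case Nil then show ?case by simp
next
  case (Cons p ps)
  obtain a b where p: "p = (a, b)" by (cases p)
  then show ?case using Cons by (simp add: pelems_Cons sw_def)
qed

lemma sig_pair: "distinct (pelems ps) \<Longrightarrow> (a, b) \<in> set ps \<Longrightarrow> sig ps a = b \<and> sig ps b = a"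
proof (induction ps)
  case Nil then show ?case by simp
next
  case (Cons p ps)
  obtain c d where p: "p = (c, d)" by (cases p)
  have dis: "distinct (pelems ps)" "c \<notin> set (pelems ps)" "d \<notin> set (pelems ps)" "c \<noteq> d"
    using Cons.prems(1) by (auto simp: p pelems_Cons)
  show ?case
  proof (cases "(a, b) = (c, d)")
    case True
    then show ?thesis using dis sig_out[of c ps] sig_out[of d ps] by (simp add: p sw_def)
  next
    case False
    then have ab: "(a, b) \<in> set ps" using Cons.prems(2) unfolding p by (metis set_ConsD)
    then have "a \<in> set (pelems ps)" "b \<in> set (pelems ps)" using pelems_mem by fastforce+
    then have "a \<noteq> c" "a \<noteq> d" "b \<noteq> c" "b \<noteq> d" using dis by auto
    then show ?thesis using Cons.IH[OF dis(1) ab] by (simp add: p sw_def)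
  qed
qed

lemma set_pelems_map: "set (pelems (map (\<lambda>x. (x, k x)) xs)) = set xs \<union> k ` set xs"
  by (induction xs) (auto simp: pelems_def)

lemma distinct_pelems_map:
  "distinct xs \<Longrightarrow> inj_on k (set xs) \<Longrightarrow> (\<forall>x\<in>set xs. \<forall>y\<in>set xs. x \<noteq> k y) \<Longrightarrow>
   distinct (pelems (map (\<lambda>x. (x, k x)) xs))"
proof (induction xs)
  case Nil then show ?case by (simp add: pelems_def)
next
  case (Cons x xs)
  have IH: "distinct (pelems (map (\<lambda>x. (x, k x)) xs))"
    using Cons by (intro Cons.IH) (auto simp: inj_on_def)
  have "x \<notin> set (pelems (map (\<lambda>x. (x, k x)) xs))" using Cons.prems unfolding set_pelems_map by auto
  moreover have "k x \<notin> set (pelems (map (\<lambda>x. (x, k x)) xs))"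
    using Cons.prems unfolding set_pelems_map inj_on_def by auto
  moreover have "x \<noteq> k x" using Cons.prems by auto
  ultimately show ?case using IH by (simp add: pelems_def)
qed

locale mainloc = fixes V :: "'v set" and G :: "('v,'a) mgraph" and H :: "('v,'b) mgraph"
  and M :: "('a,'b) half \<Rightarrow> ('a,'b) half" and S :: "'v set"
  assumes finV: "finite V" and mG: "multigraph_on V G" and mH: "multigraph_on V H"
    and degs: "\<forall>v\<in>V. deg G v = deg H v \<and> deg G v \<le> 2"
    and MPM: "M \<in> PM G H" and SV: "S \<subseteq> V4 V G"
begin

abbreviation "XX \<equiv> halves G H"
abbreviation "TM \<equiv> Tstep M"

lemma finXX: "finite XX"
  using mG mH by (intro finite_halves) (auto simp: multigraph_on_def)

lemma invM: "invol G H M" using MPM by (simp add: PM_def is_pmc_def invol_def)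

lemma M_in: "h \<in> XX \<Longrightarrow> M h \<in> XX" using MPM by (simp add: PM_def is_pmc_def)
lemma M_vtx: "h \<in> XX \<Longrightarrow> hvtx G H (M h) = hvtx G H h" using MPM by (simp add: PM_def is_pmc_def)
lemma M_type: "h \<in> XX \<Longrightarrow> isGh (M h) \<noteq> isGh h" using MPM by (simp add: PM_def)
lemma M_M: "M (M h) = h" using N_N[OF invM finXX] .

lemma hvtx_V: "h \<in> XX \<Longrightarrow> hvtx G H h \<in> V"
  using mG mH by (auto simp: halves_def hvtx_def multigraph_on_def)

lemma V4_deg: "v \<in> V4 V G \<Longrightarrow> deg G v = 2 \<and> deg H v = 2"
  using degs by (auto simp: V4_def)

lemma Z_card: assumes h: "h \<in> XX" and v: "hvtx G H h \<in> V4 V G"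
  shows "card {h' \<in> XX. hvtx G H h' = hvtx G H h \<and> isGh h' = isGh h} = 2"
proof (cases "isGh h")
  case True
  then have "{h' \<in> XX. hvtx G H h' = hvtx G H h \<and> isGh h' = isGh h} = {h' \<in> XX. isGh h' \<and> hvtx G H h' = hvtx G H h}"
    by auto
  moreover have "card {h' \<in> XX. isGh h' \<and> hvtx G H h' = hvtx G H h} = 2"
    using card_Gset[of G H "hvtx G H h"] V4_deg[OF v] by simp
  ultimately show ?thesis by simp
next
  case False
  then have "{h' \<in> XX. hvtx G H h' = hvtx G H h \<and> isGh h' = isGh h} = {h' \<in> XX. \<not> isGh h' \<and> hvtx G H h' = hvtx G H h}"
    by auto
  moreover have "card {h' \<in> XX. \<not> isGh h' \<and> hvtx G H h' = hvtx G H h} = 2"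
    using card_Hset[of G H "hvtx G H h"] V4_deg[OF v] by simp
  ultimately show ?thesis by simp
qed

lemma og_ex1: assumes h: "h \<in> XX" and v: "hvtx G H h \<in> V4 V G"
  shows "\<exists>!h'. h' \<in> XX \<and> hvtx G H h' = hvtx G H h \<and> h' \<noteq> h \<and> isGh h' = isGh h"
proof -
  let ?Z = "{h' \<in> XX. hvtx G H h' = hvtx G H h \<and> isGh h' = isGh h}"
  have hZ: "h \<in> ?Z" using h by simp
  obtain x y where xy: "?Z = {x, y}" "x \<noteq> y" using Z_card[OF h v] by (auto simp: card_2_iff)
  show ?thesis
  proof (cases "h = x")
    case True
    show ?thesis
    proof (rule ex1I[of _ y])
      show "y \<in> XX \<and> hvtx G H y = hvtx G H h \<and> y \<noteq> h \<and> isGh y = isGh h"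
      proof -
        have "y \<in> ?Z" using xy by blast
        then show ?thesis using True xy(2) by blast
      qed
      fix z assume "z \<in> XX \<and> hvtx G H z = hvtx G H h \<and> z \<noteq> h \<and> isGh z = isGh h"
      then have "z \<in> ?Z" "z \<noteq> x" using True by auto
      then show "z = y" using xy by auto
    qed
  next
    case False
    then have hy: "h = y" using hZ xy by auto
    show ?thesis
    proof (rule ex1I[of _ x])
      show "x \<in> XX \<and> hvtx G H x = hvtx G H h \<and> x \<noteq> h \<and> isGh x = isGh h"
      proof -
        have "x \<in> ?Z" using xy by blast
        then show ?thesis using hy xy(2) by blast
      qed
      fix z assume "z \<in> XX \<and> hvtx G H z = hvtx G H h \<and> z \<noteq> h \<and> isGh z = isGh h"
      then have "z \<in> ?Z" "z \<noteq> y" using hy by auto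
      then show "z = x" using xy by auto
    qed
  qed
qed

lemma og_prop: assumes "h \<in> XX" "hvtx G H h \<in> V4 V G"
  shows "og G H h \<in> XX \<and> hvtx G H (og G H h) = hvtx G H h \<and> og G H h \<noteq> h \<and> isGh (og G H h) = isGh h"
  unfolding og_def using theI'[OF og_ex1[OF assms]] .

lemma og_unique: assumes "h \<in> XX" "hvtx G H h \<in> V4 V G"
  and "h' \<in> XX" "hvtx G H h' = hvtx G H h" "h' \<noteq> h" "isGh h' = isGh h"
  shows "h' = og G H h"
  using og_ex1[OF assms(1,2)] og_prop[OF assms(1,2)] assms(3-6) by blast

lemma og_og: assumes "h \<in> XX" "hvtx G H h \<in> V4 V G" shows "og G H (og G H h) = h"
proof -
  have p: "og G H h \<in> XX" "hvtx G H (og G H h) = hvtx G H h" "og G H h \<noteq> h" "isGh (og G H h) = isGh h"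
    using og_prop[OF assms] by auto
  have v': "hvtx G H (og G H h) \<in> V4 V G" using p(2) assms(2) by simp
  have "h = og G H (og G H h)"
    by (rule og_unique[OF p(1) v' assms(1)]) (use p in auto)
  then show ?thesis by simp
qed

lemma og_M: assumes h: "h \<in> XX" and v: "hvtx G H h \<in> V4 V G" shows "og G H (M h) = M (og G H h)"
proof -
  have p: "og G H h \<in> XX" "hvtx G H (og G H h) = hvtx G H h" "og G H h \<noteq> h" "isGh (og G H h) = isGh h"
    using og_prop[OF assms] by auto
  have Mh: "M h \<in> XX" "hvtx G H (M h) \<in> V4 V G" using M_in[OF h] M_vtx[OF h] v by auto
  have "M (og G H h) \<noteq> M h" using p(3) M_M by metis
  moreover have "isGh (M (og G H h)) = isGh (M h)" using M_type[OF h] M_type[OF p(1)] p(4) by blast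
  ultimately show ?thesis using og_unique[OF Mh, of "M (og G H h)"] M_in[OF p(1)] M_vtx[OF p(1)] M_vtx[OF h] p(2)
    by simp
qed

lemma halves_at: assumes g: "g \<in> XX" "isGh g" and v: "hvtx G H g \<in> V4 V G"
  and h: "h \<in> XX" "hvtx G H h = hvtx G H g"
  shows "h = g \<or> h = og G H g \<or> h = M g \<or> h = M (og G H g)"
proof (cases "isGh h")
  case True
  then show ?thesis using og_unique[OF g(1) v h] g(2) by blast
next
  case False
  have Mg: "M g \<in> XX" "hvtx G H (M g) \<in> V4 V G" "\<not> isGh (M g)" using M_in[OF g(1)] M_vtx[OF g(1)] v M_type[OF g(1)] g(2) by auto
  have "h = M g \<or> h = og G H (M g)" using og_unique[OF Mg(1,2) h(1)] h(2) M_vtx[OF g(1)] False Mg(3) by auto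
  then show ?thesis using og_M[OF g(1) v] by auto
qed

lemma invF: "invol G H (flipS G H M S)"
  unfolding invol_def
proof (rule conjI, rule ballI)
  fix h assume h: "h \<in> XX"
  show "flipS G H M S h \<in> XX \<and> flipS G H M S h \<noteq> h \<and> flipS G H M S (flipS G H M S h) = h"
  proof (cases "hvtx G H h \<in> S")
    case True
    then have v: "hvtx G H h \<in> V4 V G" using SV by auto
    have p: "og G H h \<in> XX" "hvtx G H (og G H h) = hvtx G H h" "og G H h \<noteq> h"
      using og_prop[OF h v] by auto
    show ?thesis using p True h og_og[OF h v] by (simp add: flipS_og)
  next
    case False
    have "M h \<in> XX" "hvtx G H (M h) \<notin> S" "M h \<noteq> h" using M_in[OF h] M_vtx[OF h] False N_neq[OF invM finXX h] by auto
    then show ?thesis using h False M_M by (simp add: flipS_og)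
  qed
next
  show "\<forall>h. h \<notin> XX \<longrightarrow> flipS G H M S h = h"
  proof (intro allI impI)
    fix h assume hn: "h \<notin> XX"
    have "M h = h" using N_out[OF invM finXX hn] .
    then show "flipS G H M S h = h" using hn unfolding flipS_og by simp
  qed
qed


definition "AS = {g \<in> XX. isGh g \<and> hvtx G H g \<in> S}"

lemma finS: "finite S" using SV finV by (auto simp: V4_def intro: finite_subset)

lemma card_AS: "card AS = 2 * card S"
proof -
  have "AS = (\<Union>v\<in>S. {h \<in> XX. isGh h \<and> hvtx G H h = v})" unfolding AS_def by blast
  moreover have "card (\<Union>v\<in>S. {h \<in> XX. isGh h \<and> hvtx G H h = v}) = (\<Sum>v\<in>S. card {h \<in> XX. isGh h \<and> hvtx G H h = v})"
  proof (rule card_UN_disjoint[OF finS])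
    show "\<forall>v\<in>S. finite {h \<in> XX. isGh h \<and> hvtx G H h = v}" using finXX by simp
    show "\<forall>v\<in>S. \<forall>w\<in>S. v \<noteq> w \<longrightarrow> {h \<in> XX. isGh h \<and> hvtx G H h = v} \<inter> {h \<in> XX. isGh h \<and> hvtx G H h = w} = {}"
      by blast
  qed
  moreover have "(\<Sum>v\<in>S. card {h \<in> XX. isGh h \<and> hvtx G H h = v}) = (\<Sum>v\<in>S. 2)"
  proof (rule sum.cong)
    fix v assume "v \<in> S"
    then have "v \<in> V4 V G" using SV by auto
    then show "card {h \<in> XX. isGh h \<and> hvtx G H h = v} = 2" using card_Gset[of G H v] V4_deg by simp
  qed simp
  ultimately show ?thesis by simp
qed

lemma AS_props: "g \<in> AS \<Longrightarrow> g \<in> XX \<and> isGh g \<and> hvtx G H g \<in> S \<and> hvtx G H g \<in> V4 V G"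
  unfolding AS_def using SV by blast

lemma og_AS: assumes g: "g \<in> AS" shows "og G H g \<in> AS"
proof -
  have p: "g \<in> XX" "isGh g" "hvtx G H g \<in> S" "hvtx G H g \<in> V4 V G" using AS_props[OF g] by auto
  have "og G H g \<in> XX \<and> hvtx G H (og G H g) = hvtx G H g \<and> og G H g \<noteq> g \<and> isGh (og G H g) = isGh g"
    using og_prop[OF p(1) p(4)] .
  then show ?thesis using p unfolding AS_def by simp
qed

end

locale psloc = mainloc + fixes gs assumes gs: "distinct gs" "set gs = AS"
begin

definition "ps = map (\<lambda>g. (g, M (og G H g))) gs"

lemma ps_distinct: "distinct (pelems ps)"
  unfolding ps_def
proof (rule distinct_pelems_map[OF gs(1)])
  show "inj_on (\<lambda>g. M (og G H g)) (set gs)"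
  proof (rule inj_onI)
    fix x y assume "x \<in> set gs" "y \<in> set gs" "M (og G H x) = M (og G H y)"
    then have "og G H (og G H x) = og G H (og G H y)" using M_M by metis
    then show "x = y" using og_og AS_props gs(2) \<open>x \<in> set gs\<close> \<open>y \<in> set gs\<close> by metis
  qed
  show "\<forall>x\<in>set gs. \<forall>y\<in>set gs. x \<noteq> M (og G H y)"
  proof (intro ballI)
    fix x y assume "x \<in> set gs" "y \<in> set gs"
    then have "isGh x" "isGh (og G H y)" "og G H y \<in> XX" using AS_props og_AS gs(2) by auto
    then show "x \<noteq> M (og G H y)" using M_type by metis
  qed
qed

lemma ps_set: "set (pelems ps) = AS \<union> (\<lambda>g. M (og G H g)) ` AS"
  unfolding ps_def set_pelems_map gs(2) ..

lemma ps_len: "length ps = 2 * card S"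
  unfolding ps_def using distinct_card[OF gs(1)] gs(2) card_AS by simp

lemma ps_elems: assumes "x \<in> set (pelems ps)" shows "x \<in> XX \<and> hvtx G H x \<in> S"
proof -
  have "x \<in> AS \<or> (\<exists>g\<in>AS. x = M (og G H g))" using assms unfolding ps_set by blast
  then show ?thesis
  proof
    assume "x \<in> AS" then show ?thesis using AS_props by blast
  next
    assume "\<exists>g\<in>AS. x = M (og G H g)"
    then obtain g where g: "g \<in> AS" "x = M (og G H g)" by blast
    then have "og G H g \<in> XX" "hvtx G H (og G H g) \<in> S" using og_AS AS_props by blast+
    then show ?thesis using g M_in M_vtx by simp
  qed
qed

lemma sig_M: "sig ps (M z) = flipS G H M S z"
proof (cases "z \<in> XX \<and> hvtx G H z \<in> S")
  case False
  have "M z \<notin> set (pelems ps)"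
  proof
    assume "M z \<in> set (pelems ps)"
    then have "M z \<in> XX" "hvtx G H (M z) \<in> S" using ps_elems by auto
    moreover have "z \<in> XX" using \<open>M z \<in> XX\<close> N_out[OF invM finXX, of z] by metis
    ultimately show False using False M_vtx by metis
  qed
  then have "sig ps (M z) = M z" by (rule sig_out)
  then show ?thesis unfolding flipS_og if_not_P[OF False] .
next
  case True
  then have zX: "z \<in> XX" and zS: "hvtx G H z \<in> S" by auto
  have zV: "hvtx G H z \<in> V4 V G" using zS SV by auto
  show ?thesis
  proof (cases "isGh z")
    case True
    then have "z \<in> AS" using zX zS by (simp add: AS_def)
    then have "og G H z \<in> AS" by (rule og_AS)
    then have "(og G H z, M (og G H (og G H z))) \<in> set ps" using gs(2) unfolding ps_def by auto
    then have "(og G H z, M z) \<in> set ps" using og_og[OF zX zV] by simp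
    then have "sig ps (M z) = og G H z" using sig_pair[OF ps_distinct] by blast
    then show ?thesis using zX zS by (simp add: flipS_og)
  next
    case False
    let ?g = "M z"
    have g: "?g \<in> AS" using zX zS False M_in M_vtx M_type unfolding AS_def by auto
    then have "(?g, M (og G H ?g)) \<in> set ps" using gs(2) unfolding ps_def by auto
    then have "sig ps (M z) = M (og G H ?g)" using sig_pair[OF ps_distinct] by blast
    also have "M (og G H ?g) = og G H z"
      using og_M[OF M_in[OF zX]] M_vtx[OF zX] zV M_M by metis
    finally show ?thesis using zX zS by (simp add: flipS_og)
  qed
qed

lemma TF: "Tstep (flipS G H M S) = Qf ps TM"
proof
  fix y
  show "Tstep (flipS G H M S) y = Qf ps TM y"
    unfolding Qf_sig by (simp add: Tstep_def sig_M)
qed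

lemma main_ineq:
  "cycles G H (flipS G H M S) \<le> cycles G H M + card S \<and>
   (cycles G H (flipS G H M S) = cycles G H M + card S \<longleftrightarrow> good XX TM ps)"
proof -
  have A: "nu XX (Qf ps TM) \<le> nu XX TM + length ps \<and>
         (nu XX (Qf ps TM) = nu XX TM + length ps \<longleftrightarrow> good XX TM ps)"
    by (rule lemA[OF pT[OF invM finXX] ps_distinct]) (use ps_elems in auto)
  have c1: "2 * cycles G H (flipS G H M S) = nu XX (Qf ps TM)"
    using cycles_nu[OF invF finXX] TF by simp
  have c2: "2 * cycles G H M = nu XX TM" using cycles_nu[OF invM finXX] .
  show ?thesis using A c1 c2 ps_len by auto
qed

end



lemma cross_cd: "cross Y P a b c d = cross Y P a b d c"
  unfolding cross_def by blast

context mainloc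
begin

lemma pTM: "permX XX TM" using pT[OF invM finXX] .

lemma TM_apply: "TM h = M (hflip h)" by (simp add: Tstep_def)

lemma cyc_flipM: "h \<in> XX \<Longrightarrow> cyc XX TM (hflip (M h)) h"
proof -
  assume h: "h \<in> XX"
  have "hflip (M h) \<in> XX" using hflip_in M_in[OF h] by blast
  then have "cyc XX TM (hflip (M h)) ((TM ^^ 1) (hflip (M h)))" by (rule cyc_funpow[OF pTM])
  then show ?thesis using TM_apply[of "hflip (M h)"] M_M by simp
qed

lemma L2: assumes g: "g \<in> XX" and c: "cyc XX TM (og G H g) (M g)" and ogX: "og G H g \<in> XX"
  shows "cyc XX TM g (M (og G H g))"
proof -
  have a: "cyc XX TM g (hflip (M g))" using cyc_sym[OF pTM cyc_flipM[OF g]] .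
  have b: "cyc XX TM (hflip (M g)) (hflip (og G H g))" using mirror[OF invM finXX c] by simp
  have d: "cyc XX TM (hflip (og G H g)) (M (og G H g))" using N_cyc[OF invM finXX ogX] .
  show ?thesis using cyc_trans[OF pTM a cyc_trans[OF pTM b d]] .
qed

lemma L3: assumes c: "cyc XX TM g (M g')" and g': "g' \<in> XX" shows "\<not> cyc XX TM g g'"
proof
  assume "cyc XX TM g g'"
  have "cyc XX TM (hflip g') (M g')" using N_cyc[OF invM finXX g'] .
  then have "cyc XX TM g (hflip g')" using c cyc_sym[OF pTM] cyc_trans[OF pTM] by blast
  then have "cyc XX TM g' (hflip g')" using \<open>cyc XX TM g g'\<close> cyc_sym[OF pTM] cyc_trans[OF pTM] by blast
  then show False using not_cyc_flip[OF invM finXX] by blast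
qed

lemma L4: assumes g: "g \<in> XX" "isGh g" and v: "hvtx G H g \<in> V4 V G"
  and c: "cyc XX TM g (M (og G H g))"
  and y: "y \<in> XX" "hvtx G H y = hvtx G H g" "cyc XX TM g y"
  shows "y = g \<or> y = M (og G H g)"
proof -
  have ogX: "og G H g \<in> XX" using og_prop[OF g(1) v] by blast
  have "y = g \<or> y = og G H g \<or> y = M g \<or> y = M (og G H g)" using halves_at[OF g v y(1,2)] .
  moreover have "y \<noteq> og G H g" using L3[OF c ogX] y(3) by blast
  moreover have "y \<noteq> M g" using not_cyc_N[OF invM finXX g(1)] y(3) by blast
  ultimately show ?thesis by blast
qed

lemma ind_step: assumes h: "h \<in> XX"
  shows "hvtx G H (hflip ((TM ^^ k) h)) = hvtx G H ((TM ^^ Suc k) h)"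
proof -
  have x: "hflip ((TM ^^ k) h) \<in> XX" using hflip_in permX_funpow_in[OF pTM h] by blast
  have "(TM ^^ Suc k) h = M (hflip ((TM ^^ k) h))" using TM_apply[of "(TM ^^ k) h"] by simp
  then show ?thesis using M_vtx[OF x] by simp
qed

lemma ind_ex: assumes h: "h \<in> XX" shows "\<exists>k. hvtx G H (hflip ((TM ^^ k) h)) = hvtx G H h"
proof -
  have p: "0 < per TM h" using per_pos[OF pTM h] .
  then have "Suc (per TM h - 1) = per TM h" by simp
  then have "hvtx G H (hflip ((TM ^^ (per TM h - 1)) h)) = hvtx G H ((TM ^^ per TM h) h)"
    using ind_step[OF h, of "per TM h - 1"] by simp
  then show ?thesis using per_eq[OF pTM h] by metis
qed

definition "k0 h = (LEAST k. hvtx G H (hflip ((TM ^^ k) h)) = hvtx G H h)"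

lemma induced_eq: "induced G H M (hvtx G H h) h = hflip ((TM ^^ k0 h) h)"
  unfolding induced_def k0_def ..

lemma k0_prop: assumes h: "h \<in> XX"
  shows "hvtx G H ((TM ^^ Suc (k0 h)) h) = hvtx G H h"
    "M (hflip ((TM ^^ k0 h) h)) = (TM ^^ Suc (k0 h)) h"
proof -
  have "hvtx G H (hflip ((TM ^^ k0 h) h)) = hvtx G H h"
    unfolding k0_def using ind_ex[OF h] by (rule LeastI_ex)
  then show "hvtx G H ((TM ^^ Suc (k0 h)) h) = hvtx G H h" using ind_step[OF h] by simp
  show "M (hflip ((TM ^^ k0 h) h)) = (TM ^^ Suc (k0 h)) h" using TM_apply[of "(TM ^^ k0 h) h"] by simp
qed

lemma k0_le: assumes h: "h \<in> XX" and j: "0 < j" "hvtx G H ((TM ^^ j) h) = hvtx G H h"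
  shows "Suc (k0 h) \<le> j"
proof -
  have "Suc (j - 1) = j" using j by simp
  then have "hvtx G H (hflip ((TM ^^ (j - 1)) h)) = hvtx G H h" using ind_step[OF h, of "j - 1"] j by simp
  then have "k0 h \<le> j - 1" unfolding k0_def by (rule Least_le)
  then show ?thesis using j by simp
qed

lemma gg_iff: assumes g: "g \<in> XX" "isGh g" and v: "hvtx G H g \<in> V4 V G"
  shows "hvtx G H g \<in> gg V G H M \<longleftrightarrow> cyc XX TM g (M (og G H g))"
proof
  let ?v = "hvtx G H g" and ?g' = "og G H g"
  have p: "?g' \<in> XX" "hvtx G H ?g' = ?v" "?g' \<noteq> g" "isGh ?g'" using og_prop[OF g(1) v] g(2) by auto
  assume "?v \<in> gg V G H M"
  then obtain h where h: "h \<in> XX" "hvtx G H h = ?v" "isGh h" "isGh (induced G H M ?v h)"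
    unfolding gg_def by blast
  have hv: "hvtx G H h \<in> V4 V G" using h(2) v by simp
  let ?z = "hflip ((TM ^^ k0 h) h)"
  have zX: "?z \<in> XX" using hflip_in permX_funpow_in[OF pTM h(1)] by blast
  have zG: "isGh ?z" using h(4) induced_eq[of h] h(2) by simp
  have Mz: "M ?z = (TM ^^ Suc (k0 h)) h" "hvtx G H (M ?z) = hvtx G H h"
    using k0_prop[OF h(1)] by auto
  have cz: "cyc XX TM h (M ?z)" using Mz(1) cyc_funpow[OF pTM h(1)] by metis
  have MzH: "\<not> isGh (M ?z)" using M_type[OF zX] zG by simp
  have "M ?z = h \<or> M ?z = og G H h \<or> M ?z = M h \<or> M ?z = M (og G H h)"
    using halves_at[OF h(1) h(3) hv M_in[OF zX] Mz(2)] .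
  moreover have "M ?z \<noteq> h" using MzH h(3) by auto
  moreover have "M ?z \<noteq> og G H h" using MzH og_prop[OF h(1) hv] h(3) by auto
  moreover have "M ?z \<noteq> M h" using cz not_cyc_N[OF invM finXX h(1)] by auto
  ultimately have ch: "cyc XX TM h (M (og G H h))" using cz by auto
  have "h = g \<or> h = ?g' \<or> h = M g \<or> h = M ?g'" using halves_at[OF g v h(1)] h(2) by simp
  moreover have "\<not> isGh (M g)" "\<not> isGh (M ?g')" using M_type[OF g(1)] M_type[OF p(1)] g(2) p(4) by auto
  ultimately have "h = g \<or> h = ?g'" using h(3) by auto
  then show "cyc XX TM g (M ?g')"
  proof
    assume "h = g" then show ?thesis using ch by simp
  next
    assume hg: "h = ?g'"
    then have "cyc XX TM ?g' (M g)" using ch og_og[OF g(1) v] by simp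
    then show ?thesis using L2[OF g(1) _ p(1)] by simp
  qed
next
  let ?v = "hvtx G H g" and ?g' = "og G H g"
  have p: "?g' \<in> XX" "hvtx G H ?g' = ?v" "?g' \<noteq> g" "isGh ?g'" using og_prop[OF g(1) v] g(2) by auto
  assume c: "cyc XX TM g (M ?g')"
  have conn_at: "(g, h) \<in> conn G H M" if h: "h \<in> XX" "hvtx G H h = ?v" for h
  proof -
    have c1: "(g, M ?g') \<in> conn G H M" using cyc_conn[OF invM finXX c] .
    have c2: "(?g', M ?g') \<in> conn G H M"
      unfolding conn_def gamma_rel_def using p(1) by (intro r_into_rtrancl) blast
    have c3: "(g, M g) \<in> conn G H M"
      unfolding conn_def gamma_rel_def using g(1) by (intro r_into_rtrancl) blast
    have c4: "(g, ?g') \<in> conn G H M"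
      using c1 conn_sym[OF invM finXX c2] unfolding conn_def by (rule rtrancl_trans)
    have c0: "(g, g) \<in> conn G H M" unfolding conn_def by simp
    show ?thesis using halves_at[OF g v h] c0 c1 c3 c4 by blast
  qed
  have vt: "visits_twice G H M ?v"
    unfolding visits_twice_def
  proof (intro ballI impI)
    fix h h' assume hX: "h \<in> XX" "h' \<in> XX" and hv: "hvtx G H h = ?v \<and> hvtx G H h' = ?v"
    have "(h, g) \<in> conn G H M" using conn_sym[OF invM finXX conn_at[OF hX(1)]] hv by simp
    moreover have "(g, h') \<in> conn G H M" using conn_at[OF hX(2)] hv by simp
    ultimately show "(h, h') \<in> conn G H M" unfolding conn_def by (rule rtrancl_trans)
  qed
  let ?j = "pdist TM g (M ?g')"
  have j: "(TM ^^ ?j) g = M ?g'" "?j < per TM g" using pdist_prop[OF pTM c] by auto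
  have MgG: "M ?g' \<noteq> g" using M_type[OF p(1)] p(4) g(2) by auto
  have j0: "0 < ?j" using pdist_zero[OF pTM c] MgG by (metis neq0_conv)
  have jv: "hvtx G H ((TM ^^ ?j) g) = ?v" using j(1) M_vtx[OF p(1)] p(2) by simp
  have kle: "Suc (k0 g) \<le> ?j" using k0_le[OF g(1) j0 jv] .
  let ?y = "(TM ^^ Suc (k0 g)) g"
  have y1: "?y \<in> XX" by (rule permX_funpow_in[OF pTM g(1)])
  have y2: "hvtx G H ?y = ?v" by (rule k0_prop(1)[OF g(1)])
  have y3: "cyc XX TM g ?y" by (rule cyc_funpow[OF pTM g(1)])
  note y = y1 y2 y3
  have "?y \<noteq> g" using per_min[OF pTM, of "Suc (k0 g)" g] kle j(2) by simp
  then have "?y = M ?g'" using L4[OF g v c y] by simp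
  then have "M (hflip ((TM ^^ k0 g) g)) = M ?g'" using k0_prop(2)[OF g(1)] by simp
  then have "hflip ((TM ^^ k0 g) g) = ?g'" using M_M by metis
  then have "isGh (induced G H M ?v g)" using induced_eq[of g] p(4) by simp
  then show "?v \<in> gg V G H M" unfolding gg_def using v vt g by blast
qed


lemma Gset_ne: assumes "v \<in> V4 V G" shows "\<exists>g. g \<in> XX \<and> isGh g \<and> hvtx G H g = v"
proof -
  have "card {h \<in> XX. isGh h \<and> hvtx G H h = v} = 2" using card_Gset[of G H v] V4_deg[OF assms] by simp
  then have "{h \<in> XX. isGh h \<and> hvtx G H h = v} \<noteq> {}" by (metis card.empty zero_neq_numeral)
  then show ?thesis by blast
qed

lemma orbit_pair: assumes g: "g \<in> AS" and gg: "hvtx G H g \<in> gg V G H M"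
  and x: "x = g \<or> x = M (og G H g)"
  shows "cyc XX TM g (M (og G H g)) \<and>
    (\<forall>y. y \<in> XX \<and> hvtx G H y = hvtx G H g \<and> cyc XX TM x y \<longrightarrow> y = g \<or> y = M (og G H g))"
proof -
  have gp: "g \<in> XX" "isGh g" "hvtx G H g \<in> V4 V G" using AS_props[OF g] by blast+
  have c: "cyc XX TM g (M (og G H g))" using gg_iff[OF gp] gg by simp
  have cx: "cyc XX TM g x" using x c cyc_refl[OF pTM gp(1)] by blast
  show ?thesis
  proof (intro conjI allI impI)
    show "cyc XX TM g (M (og G H g))" by (rule c)
    fix y assume y: "y \<in> XX \<and> hvtx G H y = hvtx G H g \<and> cyc XX TM x y"
    then have "cyc XX TM g y" using cx cyc_trans[OF pTM] by blast
    then show "y = g \<or> y = M (og G H g)" using L4[OF gp(1,2,3) c] y by blast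
  qed
qed

lemma orbit_at: assumes u: "u \<in> S" "u \<in> gg V G H M" and x: "x \<in> XX" "hvtx G H x = u"
  shows "\<exists>g\<in>AS. hvtx G H g = u \<and> (x = g \<or> x = M (og G H g)) \<and> cyc XX TM g (M (og G H g)) \<and>
    (\<forall>y. y \<in> XX \<and> hvtx G H y = u \<and> cyc XX TM x y \<longrightarrow> y = g \<or> y = M (og G H g))"
proof -
  have uV: "u \<in> V4 V G" using u SV by auto
  obtain g0 where g0: "g0 \<in> XX" "isGh g0" "hvtx G H g0 = u" using Gset_ne[OF uV] by blast
  have g0A: "g0 \<in> AS" using g0 u unfolding AS_def by simp
  have og0A: "og G H g0 \<in> AS" using og_AS[OF g0A] .
  have og0v: "hvtx G H (og G H g0) = u" using og_prop[of g0] g0 uV by simp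
  have oog: "og G H (og G H g0) = g0" using og_og[of g0] g0 uV by simp
  have "x = g0 \<or> x = og G H g0 \<or> x = M g0 \<or> x = M (og G H g0)"
    using halves_at[of g0 x] g0 uV x by simp
  then have xs: "x = g0 \<or> x = M (og G H g0) \<or> x = og G H g0 \<or> x = M (og G H (og G H g0))"
    using oog by auto
  have ggv0: "hvtx G H g0 \<in> gg V G H M" using g0(3) u(2) by simp
  have ggv1: "hvtx G H (og G H g0) \<in> gg V G H M" using og0v u(2) by simp
  show ?thesis
  proof (cases "x = g0 \<or> x = M (og G H g0)")
    case True
    have op: "cyc XX TM g0 (M (og G H g0)) \<and>
      (\<forall>y. y \<in> XX \<and> hvtx G H y = hvtx G H g0 \<and> cyc XX TM x y \<longrightarrow> y = g0 \<or> y = M (og G H g0))"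
      by (rule orbit_pair[OF g0A ggv0 True])
    then have op': "cyc XX TM g0 (M (og G H g0)) \<and>
      (\<forall>y. y \<in> XX \<and> hvtx G H y = u \<and> cyc XX TM x y \<longrightarrow> y = g0 \<or> y = M (og G H g0))"
      using g0(3) by simp
    show ?thesis using g0A g0(3) True op' by blast
  next
    case False
    then have x2: "x = og G H g0 \<or> x = M (og G H (og G H g0))" using xs by blast
    have op: "cyc XX TM (og G H g0) (M (og G H (og G H g0))) \<and>
      (\<forall>y. y \<in> XX \<and> hvtx G H y = hvtx G H (og G H g0) \<and> cyc XX TM x y \<longrightarrow>
         y = og G H g0 \<or> y = M (og G H (og G H g0)))"
      by (rule orbit_pair[OF og0A ggv1 x2])
    then have op': "cyc XX TM (og G H g0) (M (og G H (og G H g0))) \<and>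
      (\<forall>y. y \<in> XX \<and> hvtx G H y = u \<and> cyc XX TM x y \<longrightarrow>
         y = og G H g0 \<or> y = M (og G H (og G H g0)))"
      using og0v by simp
    show ?thesis using og0A og0v x2 op' by blast
  qed
qed

lemma cross_formal: assumes u: "u \<in> S" "u \<in> gg V G H M" and w: "w \<in> S" "w \<in> gg V G H M" and uw: "u \<noteq> w"
  shows "crosses G H M u w \<longleftrightarrow> (\<exists>g1\<in>AS. \<exists>g2\<in>AS. hvtx G H g1 = u \<and> hvtx G H g2 = w \<and>
            cross XX TM g1 (M (og G H g1)) g2 (M (og G H g2)))"
proof
  assume "crosses G H M u w"
  then obtain x k1 k2 k3 where xX: "x \<in> XX" and xu: "hvtx G H x = u"
    and ks: "0 < k1" "k1 < k2" "k2 < k3"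
    and v1: "hvtx G H ((TM ^^ k1) x) = w" and v2: "hvtx G H ((TM ^^ k2) x) = u"
    and v3: "hvtx G H ((TM ^^ k3) x) = w"
    and nr: "\<forall>j. 0 < j \<and> j \<le> k3 \<longrightarrow> (TM ^^ j) x \<noteq> x"
    unfolding crosses_def by blast
  have k3p: "k3 < per TM x"
  proof (rule ccontr)
    assume "\<not> k3 < per TM x"
    then have "per TM x \<le> k3" by simp
    then have "(TM ^^ per TM x) x \<noteq> x" using nr per_pos[OF pTM xX] by blast
    then show False using per_eq[OF pTM xX] by simp
  qed
  let ?y1 = "(TM ^^ k1) x" and ?y2 = "(TM ^^ k2) x" and ?y3 = "(TM ^^ k3) x"
  have yX: "?y1 \<in> XX" "?y2 \<in> XX" "?y3 \<in> XX" using permX_funpow_in[OF pTM xX] by blast+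
  have cy: "cyc XX TM x ?y1" "cyc XX TM x ?y2" "cyc XX TM x ?y3" using cyc_funpow[OF pTM xX] by blast+
  obtain g1 where g1: "g1 \<in> AS" "hvtx G H g1 = u" "x = g1 \<or> x = M (og G H g1)"
    and cl1: "\<forall>y. y \<in> XX \<and> hvtx G H y = u \<and> cyc XX TM x y \<longrightarrow> y = g1 \<or> y = M (og G H g1)"
    using orbit_at[OF u xX xu] by blast
  obtain g2 where g2: "g2 \<in> AS" "hvtx G H g2 = w" "?y1 = g2 \<or> ?y1 = M (og G H g2)"
    and cl2: "\<forall>y. y \<in> XX \<and> hvtx G H y = w \<and> cyc XX TM ?y1 y \<longrightarrow> y = g2 \<or> y = M (og G H g2)"
    using orbit_at[OF w yX(1) v1] by blast
  have y2ne: "?y2 \<noteq> x" using per_min[OF pTM, of k2 x] ks k3p by simp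
  have y2in: "?y2 = g1 \<or> ?y2 = M (og G H g1)" using cl1 yX(2) v2 cy(2) by blast
  have c13: "cyc XX TM ?y1 ?y3" using cy(1,3) cyc_sym[OF pTM] cyc_trans[OF pTM] by blast
  have y3in: "?y3 = g2 \<or> ?y3 = M (og G H g2)" using cl2 yX(3) v3 c13 by blast
  have y13: "?y1 \<noteq> ?y3" using funpow_inj_per[OF pTM xX, of k1 k3] ks k3p by auto
  have pd: "pdist TM x ?y1 = k1" "pdist TM x ?y2 = k2" "pdist TM x ?y3 = k3"
    using pdist_unique[OF pTM xX] ks k3p by auto
  have cr: "cross XX TM x ?y2 ?y1 ?y3" unfolding cross_def using cy pd ks by simp
  have s1: "cross XX TM x ?y2 c d \<longleftrightarrow> cross XX TM ?y2 x c d" for c d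
    using cross_sym1[OF pTM cy(2) y2ne[symmetric]] .
  have cr1: "cross XX TM g1 (M (og G H g1)) ?y1 ?y3"
  proof (cases "x = g1")
    case True
    then have "?y2 = M (og G H g1)" using y2in y2ne by auto
    then show ?thesis using cr True by simp
  next
    case False
    then have xe: "x = M (og G H g1)" using g1(3) by simp
    then have "?y2 = g1" using y2in y2ne by auto
    then have "cross XX TM ?y2 x ?y1 ?y3 = cross XX TM g1 (M (og G H g1)) ?y1 ?y3" using xe by simp
    then show ?thesis using cr s1 by simp
  qed
  have cr2: "cross XX TM g1 (M (og G H g1)) g2 (M (og G H g2))"
  proof (cases "?y1 = g2")
    case True
    then have "?y3 = M (og G H g2)" using y3in y13 by auto
    then show ?thesis using cr1 True by simp
  next
    case False
    then have ye: "?y1 = M (og G H g2)" using g2(3) by simp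
    then have "?y3 = g2" using y3in y13 by auto
    then show ?thesis using cr1 ye cross_cd[of XX TM g1 "M (og G H g1)" ?y1 ?y3] by simp
  qed
  show "\<exists>g1\<in>AS. \<exists>g2\<in>AS. hvtx G H g1 = u \<and> hvtx G H g2 = w \<and> cross XX TM g1 (M (og G H g1)) g2 (M (og G H g2))"
    using g1 g2 cr2 by blast
next
  assume "\<exists>g1\<in>AS. \<exists>g2\<in>AS. hvtx G H g1 = u \<and> hvtx G H g2 = w \<and> cross XX TM g1 (M (og G H g1)) g2 (M (og G H g2))"
  then obtain g1 g2 where g1: "g1 \<in> AS" "hvtx G H g1 = u" and g2: "g2 \<in> AS" "hvtx G H g2 = w"
    and cr: "cross XX TM g1 (M (og G H g1)) g2 (M (og G H g2))" by blast
  let ?b1 = "M (og G H g1)" and ?b2 = "M (og G H g2)"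
  have g1p: "g1 \<in> XX" "hvtx G H g1 \<in> V4 V G" using AS_props[OF g1(1)] by blast+
  have g2p: "g2 \<in> XX" "hvtx G H g2 \<in> V4 V G" using AS_props[OF g2(1)] by blast+
  have b1v: "hvtx G H ?b1 = u" using og_prop[OF g1p] M_vtx g1(2) by simp
  have b2v: "hvtx G H ?b2 = w" using og_prop[OF g2p] M_vtx g2(2) by simp
  have cs: "cyc XX TM g1 ?b1" "cyc XX TM g1 g2" "cyc XX TM g1 ?b2"
    and ne: "(pdist TM g1 g2 < pdist TM g1 ?b1) \<noteq> (pdist TM g1 ?b2 < pdist TM g1 ?b1)"
    using cr unfolding cross_def by auto
  let ?m = "pdist TM g1 ?b1" and ?pc = "pdist TM g1 g2" and ?pd = "pdist TM g1 ?b2"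
  have e: "(TM ^^ ?m) g1 = ?b1" "(TM ^^ ?pc) g1 = g2" "(TM ^^ ?pd) g1 = ?b2"
    using pdist_prop[OF pTM] cs by blast+
  have lt: "?m < per TM g1" "?pc < per TM g1" "?pd < per TM g1"
    using pdist_prop[OF pTM] cs by blast+
  have mc: "?m \<noteq> ?pc"
  proof (rule notI)
    assume "?m = ?pc"
    then have "?b1 = g2" using e(1,2) by metis
    then show False using b1v g2(2) uw by simp
  qed
  have md: "?m \<noteq> ?pd"
  proof (rule notI)
    assume "?m = ?pd"
    then have "?b1 = ?b2" using e(1,3) by metis
    then show False using b1v b2v uw by simp
  qed
  have pc0: "0 < ?pc"
  proof (rule ccontr)
    assume "\<not> 0 < ?pc"
    then have z: "?pc = 0" by simp
    have "(TM ^^ 0) g1 = g2" using e(2) by (simp only: z)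
    then have "g2 = g1" by simp
    then show False using g1(2) g2(2) uw by simp
  qed
  have pd0: "0 < ?pd"
  proof (rule ccontr)
    assume "\<not> 0 < ?pd"
    then have z: "?pd = 0" by simp
    have "(TM ^^ 0) g1 = ?b2" using e(3) by (simp only: z)
    then have "?b2 = g1" by simp
    then show False using g1(2) b2v uw by simp
  qed
  define k1 where "k1 = min ?pc ?pd"
  define k3 where "k3 = max ?pc ?pd"
  have ks: "0 < k1" "k1 < ?m" "?m < k3" "k3 < per TM g1"
    using ne mc md pc0 pd0 lt unfolding k1_def k3_def by auto
  have w2: "hvtx G H ((TM ^^ ?pc) g1) = w" using e(2) g2(2) by (simp only:)
  have w3: "hvtx G H ((TM ^^ ?pd) g1) = w" using e(3) b2v by (simp only:)
  have "k1 = ?pc \<or> k1 = ?pd" unfolding k1_def by (simp add: min_def)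
  then have vk1: "hvtx G H ((TM ^^ k1) g1) = w" using w2 w3 by metis
  have "k3 = ?pc \<or> k3 = ?pd" unfolding k3_def by (simp add: max_def)
  then have vk3: "hvtx G H ((TM ^^ k3) g1) = w" using w2 w3 by metis
  have vk2: "hvtx G H ((TM ^^ ?m) g1) = u" using e(1) b1v by (simp only:)
  have nr: "\<forall>j. 0 < j \<and> j \<le> k3 \<longrightarrow> (TM ^^ j) g1 \<noteq> g1"
  proof (intro allI impI)
    fix j assume "0 < j \<and> j \<le> k3"
    then have "0 < j" "j < per TM g1" using ks by auto
    then show "(TM ^^ j) g1 \<noteq> g1" by (rule per_min[OF pTM])
  qed
  have "g1 \<in> XX \<and> (hvtx G H g1 = u \<and> 0 < k1 \<and> k1 < ?m \<and> ?m < k3 \<and>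
      hvtx G H ((TM ^^ k1) g1) = w \<and> hvtx G H ((TM ^^ ?m) g1) = u \<and>
      hvtx G H ((TM ^^ k3) g1) = w \<and>
      (\<forall>j. 0 < j \<and> j \<le> k3 \<longrightarrow> (TM ^^ j) g1 \<noteq> g1))"
    using g1p(1) g1(2) ks vk1 vk2 vk3 nr by simp
  then show "crosses G H M u w" unfolding crosses_def by blast
qed

end

context psloc
begin

lemma ps_mem: "(a, b) \<in> set ps \<longleftrightarrow> a \<in> AS \<and> b = M (og G H a)"
  unfolding ps_def using gs(2) by auto

lemma good_equiv: "good XX TM ps \<longleftrightarrow> S \<subseteq> gg V G H M \<and> non_crossing G H M S"
proof -
  have part1: "(\<forall>a b. (a, b) \<in> set ps \<longrightarrow> cyc XX TM a b) \<longleftrightarrow> S \<subseteq> gg V G H M"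
  proof
    assume h: "\<forall>a b. (a, b) \<in> set ps \<longrightarrow> cyc XX TM a b"
    show "S \<subseteq> gg V G H M"
    proof
      fix v assume v: "v \<in> S"
      then have vV: "v \<in> V4 V G" using SV by auto
      obtain g where g: "g \<in> XX" "isGh g" "hvtx G H g = v" using Gset_ne[OF vV] by blast
      then have gA: "g \<in> AS" using v unfolding AS_def by simp
      have "cyc XX TM g (M (og G H g))" using h ps_mem gA by blast
      then show "v \<in> gg V G H M" using gg_iff[of g] g vV by simp
    qed
  next
    assume h: "S \<subseteq> gg V G H M"
    show "\<forall>a b. (a, b) \<in> set ps \<longrightarrow> cyc XX TM a b"
    proof (intro allI impI)
      fix a b assume "(a, b) \<in> set ps"
      then have ab: "a \<in> AS" "b = M (og G H a)" using ps_mem by auto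
      have ap: "a \<in> XX" "isGh a" "hvtx G H a \<in> S" "hvtx G H a \<in> V4 V G" using AS_props[OF ab(1)] by blast+
      show "cyc XX TM a b" using gg_iff[OF ap(1,2,4)] h ap(3) ab(2) by auto
    qed
  qed
  have part2: "(\<forall>a b c d. (a, b) \<in> set ps \<longrightarrow> (c, d) \<in> set ps \<longrightarrow> (a, b) \<noteq> (c, d) \<longrightarrow> \<not> cross XX TM a b c d)
      \<longleftrightarrow> non_crossing G H M S" if sg: "S \<subseteq> gg V G H M"
  proof
    assume h: "\<forall>a b c d. (a, b) \<in> set ps \<longrightarrow> (c, d) \<in> set ps \<longrightarrow> (a, b) \<noteq> (c, d) \<longrightarrow> \<not> cross XX TM a b c d"
    show "non_crossing G H M S" unfolding non_crossing_def
    proof (intro ballI impI notI)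
      fix u w assume u: "u \<in> S" and w: "w \<in> S" and uw: "u \<noteq> w" and c: "crosses G H M u w"
      obtain g1 g2 where g: "g1 \<in> AS" "g2 \<in> AS" "hvtx G H g1 = u" "hvtx G H g2 = w"
        and cr: "cross XX TM g1 (M (og G H g1)) g2 (M (og G H g2))"
        using cross_formal[of u w] u w uw sg c by blast
      have "(g1, M (og G H g1)) \<in> set ps" "(g2, M (og G H g2)) \<in> set ps" using ps_mem g by auto
      moreover have "(g1, M (og G H g1)) \<noteq> (g2, M (og G H g2))" using g uw by auto
      ultimately show False using h cr by blast
    qed
  next
    assume nc: "non_crossing G H M S"
    show "\<forall>a b c d. (a, b) \<in> set ps \<longrightarrow> (c, d) \<in> set ps \<longrightarrow> (a, b) \<noteq> (c, d) \<longrightarrow> \<not> cross XX TM a b c d"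
    proof (intro allI impI notI)
      fix a b c d assume ab: "(a, b) \<in> set ps" and cd: "(c, d) \<in> set ps" and ne: "(a, b) \<noteq> (c, d)"
        and cr: "cross XX TM a b c d"
      have a: "a \<in> AS" "b = M (og G H a)" using ps_mem ab by auto
      have c: "c \<in> AS" "d = M (og G H c)" using ps_mem cd by auto
      have ac: "a \<noteq> c" using ne a c by auto
      have ap: "a \<in> XX" "isGh a" "hvtx G H a \<in> S" "hvtx G H a \<in> V4 V G" using AS_props[OF a(1)] by blast+
      have cp: "c \<in> XX" "isGh c" "hvtx G H c \<in> S" "hvtx G H c \<in> V4 V G" using AS_props[OF c(1)] by blast+
      show False
      proof (cases "hvtx G H a = hvtx G H c")
        case True
        have "c = og G H a" using og_unique[OF ap(1,4) cp(1)] True ac ap(2) cp(2) by simp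
        moreover have "cyc XX TM a (M (og G H a))" using gg_iff[OF ap(1,2,4)] sg ap(3) by auto
        ultimately have "\<not> cyc XX TM a c" using L3 og_prop[OF ap(1,4)] by blast
        then show False using cr unfolding cross_def by blast
      next
        case False
        have "crosses G H M (hvtx G H a) (hvtx G H c)"
          using cross_formal[of "hvtx G H a" "hvtx G H c"] ap(3) cp(3) sg False a c cr by blast
        then show False using nc ap(3) cp(3) False unfolding non_crossing_def by blast
      qed
    qed
  qed
  show ?thesis
  proof
    assume "good XX TM ps"
    then have g1: "\<forall>a b. (a, b) \<in> set ps \<longrightarrow> cyc XX TM a b"
      and g2: "\<forall>a b c d. (a, b) \<in> set ps \<longrightarrow> (c, d) \<in> set ps \<longrightarrow> (a, b) \<noteq> (c, d) \<longrightarrow> \<not> cross XX TM a b c d"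
      unfolding good_iff by blast+
    have sg: "S \<subseteq> gg V G H M" using part1 g1 by blast
    have "non_crossing G H M S" using part2[OF sg] g2 by blast
    then show "S \<subseteq> gg V G H M \<and> non_crossing G H M S" using sg by blast
  next
    assume h: "S \<subseteq> gg V G H M \<and> non_crossing G H M S"
    then have sg: "S \<subseteq> gg V G H M" and nc: "non_crossing G H M S" by blast+
    have g1: "\<forall>a b. (a, b) \<in> set ps \<longrightarrow> cyc XX TM a b" using part1 sg by blast
    have g2: "\<forall>a b c d. (a, b) \<in> set ps \<longrightarrow> (c, d) \<in> set ps \<longrightarrow> (a, b) \<noteq> (c, d) \<longrightarrow> \<not> cross XX TM a b c d"
      using part2[OF sg] nc by blast
    show "good XX TM ps" unfolding good_iff using g1 g2 by blast
  qed
qed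

end


theorem mainTheorem13:
  fixes V :: "'v set" and G :: "('v,'a) mgraph" and H :: "('v,'b) mgraph"
    and M :: "('a,'b) half \<Rightarrow> ('a,'b) half" and S :: "'v set"
  assumes "finite V"
    and "multigraph_on V G" and "multigraph_on V H"
    and "loopless G" and "loopless H"
    and "\<forall>v\<in>V. deg G v = deg H v \<and> deg G v \<le> 2"
    and "M \<in> PM G H"
    and "S \<subseteq> V4 V G"
  shows "cycles G H (flipS G H M S) \<le> cycles G H M + card S
    \<and> (cycles G H (flipS G H M S) = cycles G H M + card S
         \<longleftrightarrow> S \<subseteq> gg V G H M \<and> non_crossing G H M S)"
proof -
  have ml: "mainloc V G H M S" unfolding mainloc_def using assms by blast
  interpret m: mainloc V G H M S by (rule ml)
  have "finite m.AS" unfolding m.AS_def using m.finXX by simp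
  then obtain gs where gs: "distinct gs" "set gs = m.AS" using finite_distinct_list by metis
  have pl: "psloc V G H M S gs" unfolding psloc_def psloc_axioms_def using ml gs by blast
  interpret p: psloc V G H M S gs by (rule pl)
  show ?thesis using p.main_ineq p.good_equiv by simp
qed

end
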